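(* Let $1\le q\le\infty$, $s\in\mathbb R$. For $N\ge2$ and $R>0$ let $\phi_{0,N}$ on $\mathbb R$ be defined by $\mathcal F\phi_{0,N}=R\chi_{I_N}$, $I_N=[-N-1,-N+1]\cup[N-1,N+1]$. Then there exist $T_0>0$, $N_0\ge2$ and $c>0$ such that for all $N\ge N_0$, $R>0$ and $0<T\le T_0$, $$\|U_2[\phi_{0,N}](T)\|_{W^{2,q}_s}\ \ge\ \big\|\,\|\square_nU_2[\phi_{0,N}](T)(x)\langle n\rangle^s\|_{\ell^q(n=1)}\big\|_{L^2_x}\ \ge\ c\,R^2T,$$ where $\|a_n\|_{\ell^q(n=1)}=|a_1|$.
   Context: On $\mathbb R$: $\mathcal F$ the Fourier transform, $\langle n\rangle=(1+|n|^2)^{1/2}$. $\square_n=\mathcal F^{-1}\sigma_n\mathcal F$, $\sigma_n=\rho_n/\sum_{\ell\in\mathbb Z}\rho_\ell$, $\rho_n(\xi)=\rho(\xi-n)$, with $\rho\in\mathcal S(\mathbb R)$, $0\le\rho\le1$, $\rho=1$ for $|\xi|\le\frac12$, $\rho=0$ for $|\xi|\ge1$; $\|f\|_{W^{p,q}_s}=\big\|\,\|\square_nf(x)\langle n\rangle^s\|_{\ell^q_n(\mathbb Z)}\big\|_{L^p_x(\mathbb R)}$. With $\varphi(\xi)=\xi/(1+\xi^2)$, $U(t)=\mathcal F^{-1}e^{it\varphi(\xi)}\mathcal F$, $\mathcal N(u,v)(t)=\int_0^tU(t-\tau)\varphi(D_x)(uv)(\tau)\,d\tau$, the second Picard iterate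 is $U_2[u_0](t)=-\frac i2\mathcal N(U(\cdot)u_0,U(\cdot)u_0)(t)$. *)

theory Defs
  imports "HOL-Analysis.Analysis"
begin

definition schwartz :: "(real \<Rightarrow> real) \<Rightarrow> bool" where
  "schwartz f \<longleftrightarrow>
     (\<forall>j x. (deriv ^^ j) f differentiable (at x)) \<and>
     (\<forall>j k. bounded (range (\<lambda>x. x ^ k * (deriv ^^ j) f x)))"

definition admissible_rho :: "(real \<Rightarrow> real) \<Rightarrow> bool" where
  "admissible_rho \<rho> \<longleftrightarrow> schwartz \<rho> \<and> (\<forall>x. 0 \<le> \<rho> x \<and> \<rho> x \<le> 1)
     \<and> (\<forall>x. \<bar>x\<bar> \<le> 1/2 \<longrightarrow> \<rho> x = 1) \<and> (\<forall>x. \<bar>x\<bar> \<ge> 1 \<longrightarrow> \<rho> x = 0)"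

text \<open>Fourier transform and its inverse (convention: F f(xi) = int f(x) e^{-i x xi} dx),
  defined as limits of integrals over [-R,R] so that they also make sense for
  L^2-type functions such as phi_{0,N}; for integrable functions this is the usual integral.\<close>
definition fourier :: "(real \<Rightarrow> complex) \<Rightarrow> real \<Rightarrow> complex" where
  "fourier f \<xi> = Lim at_top (\<lambda>R::real. LINT x:{-R..R}|lborel. f x * cis (- (x * \<xi>)))"

definition ifourier :: "(real \<Rightarrow> complex) \<Rightarrow> real \<Rightarrow> complex" where
  "ifourier g x = Lim at_top (\<lambda>R::real. LINT \<xi>:{-R..R}|lborel. g \<xi> * cis (x * \<xi>)) / (2 * pi)"

definition fmult :: "(real \<Rightarrow> complex) \<Rightarrow> (real \<Rightarrow> complex) \<Rightarrow> real \<Rightarrow> complex" where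
  "fmult m f = ifourier (\<lambda>\<xi>. m \<xi> * fourier f \<xi>)"

definition japan :: "int \<Rightarrow> real" where
  "japan n = sqrt (1 + (real_of_int n)\<^sup>2)"

definition sigma :: "(real \<Rightarrow> real) \<Rightarrow> int \<Rightarrow> real \<Rightarrow> real" where
  "sigma \<rho> n \<xi> = \<rho> (\<xi> - of_int n) / infsum (\<lambda>l::int. \<rho> (\<xi> - of_int l)) UNIV"

definition box :: "(real \<Rightarrow> real) \<Rightarrow> int \<Rightarrow> (real \<Rightarrow> complex) \<Rightarrow> real \<Rightarrow> complex" where
  "box \<rho> n f = fmult (\<lambda>\<xi>. complex_of_real (sigma \<rho> n \<xi>)) f"

definition epowr :: "ennreal \<Rightarrow> real \<Rightarrow> ennreal" where
  "epowr x a = (if x = \<infinity> then \<infinity> else ennreal (enn2real x powr a))"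

definition lq_norm :: "ennreal \<Rightarrow> (int \<Rightarrow> real) \<Rightarrow> ennreal" where
  "lq_norm q a = (if q = \<infinity> then (SUP n. ennreal \<bar>a n\<bar>)
     else epowr (\<Sum>\<^sub>\<infinity> n. ennreal (\<bar>a n\<bar> powr enn2real q)) (1 / enn2real q))"

definition Lp_norm :: "real \<Rightarrow> (real \<Rightarrow> ennreal) \<Rightarrow> ennreal" where
  "Lp_norm p g = epowr (\<integral>\<^sup>+ x. epowr (g x) p \<partial>lborel) (1 / p)"

definition W_norm :: "(real \<Rightarrow> real) \<Rightarrow> real \<Rightarrow> ennreal \<Rightarrow> real \<Rightarrow> (real \<Rightarrow> complex) \<Rightarrow> ennreal" where
  "W_norm \<rho> p q s f = Lp_norm p (\<lambda>x. lq_norm q (\<lambda>n. cmod (box \<rho> n f x) * japan n powr s))"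

definition dispersion :: "real \<Rightarrow> real" where
  "dispersion \<xi> = \<xi> / (1 + \<xi>\<^sup>2)"

definition U :: "real \<Rightarrow> (real \<Rightarrow> complex) \<Rightarrow> real \<Rightarrow> complex" where
  "U t f = fmult (\<lambda>\<xi>. cis (t * dispersion \<xi>)) f"

definition phiD :: "(real \<Rightarrow> complex) \<Rightarrow> real \<Rightarrow> complex" where
  "phiD f = fmult (\<lambda>\<xi>. complex_of_real (dispersion \<xi>)) f"

definition duhamel :: "(real \<Rightarrow> real \<Rightarrow> complex) \<Rightarrow> (real \<Rightarrow> real \<Rightarrow> complex) \<Rightarrow> real \<Rightarrow> real \<Rightarrow> complex" where
  "duhamel u v t x = (LINT \<tau>:{0..t}|lborel. U (t - \<tau>) (phiD (\<lambda>y. u \<tau> y * v \<tau> y)) x)"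

definition U2 :: "(real \<Rightarrow> complex) \<Rightarrow> real \<Rightarrow> real \<Rightarrow> complex" where
  "U2 u0 t = (\<lambda>x. - (\<i> / 2) * duhamel (\<lambda>\<tau>. U \<tau> u0) (\<lambda>\<tau>. U \<tau> u0) t x)"

definition I_N :: "real \<Rightarrow> real set" where
  "I_N N = {-N-1..-N+1} \<union> {N-1..N+1}"

definition phi0 :: "real \<Rightarrow> real \<Rightarrow> real \<Rightarrow> complex" where
  "phi0 N R = ifourier (\<lambda>\<xi>. complex_of_real (R * indicator (I_N N) \<xi>))"

end

theory Submission
  imports Defs "HOL-Probability.Sinc_Integral" "HOL-Probability.Characteristic_Functions"
begin

lemma integrable_Icc_ind: "integrable lborel (\<lambda>x::real. c * indicator {a..b} x :: real)"
  by (intro integrable_mult_right integrable_real_indicator) (auto simp: emeasure_lborel_Icc_eq)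

lemma bcs_integrable:
  fixes h :: "real \<Rightarrow> real"
  assumes "h \<in> borel_measurable borel" "\<And>x. \<bar>h x\<bar> \<le> C" "\<And>x. \<bar>x\<bar> > M \<Longrightarrow> h x = 0"
  shows "integrable lborel h"
proof (rule Bochner_Integration.integrable_bound[OF integrable_Icc_ind[of C "-M" M]])
  show "h \<in> borel_measurable lborel" using assms(1) by simp
  show "AE x in lborel. norm (h x) \<le> norm (C * indicator {- M..M} x)"
  proof (rule AE_I2)
    fix x show "norm (h x) \<le> norm (C * indicator {- M..M} x)"
      using assms(2)[of x] assms(3)[of x] by (cases "\<bar>x\<bar> > M") (auto simp: indicator_def)
  qed
qed

lemma density_cont:
  fixes h :: "real \<Rightarrow> real"
  assumes hm: "h \<in> borel_measurable borel" and hb: "\<And>x. \<bar>h x\<bar> \<le> C"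
    and hs: "\<And>x. \<bar>x\<bar> > M \<Longrightarrow> h x = 0" and e: "e > 0"
  shows "\<exists>g. continuous_on UNIV g \<and> (\<forall>x. \<bar>x\<bar> > M + 1 \<longrightarrow> g x = 0) \<and> (\<forall>x. \<bar>g x\<bar> \<le> C)
          \<and> (LBINT x. \<bar>h x - g x\<bar>) < e"
proof -
  have C0: "0 \<le> C" using hb[of 0] by simp
  have "h \<in> borel_measurable lebesgue" using hm by (simp add: measurable_completion)
  then have "h measurable_on UNIV" by (rule lebesgue_measurable_imp_measurable_on_real) simp
  then obtain N g where N: "negligible N" and gc: "\<And>n. continuous_on UNIV (g n)"
    and gl: "\<And>x. x \<notin> N \<Longrightarrow> (\<lambda>n. g n x) \<longlonglongrightarrow> h x"
    unfolding measurable_on_def by auto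
  define \<psi> where "\<psi> x = max 0 (min 1 (M + 1 - \<bar>x\<bar>))" for x :: real
  define k where "k n x = \<psi> x * max (-C) (min C (g n x))" for n x
  have kc: "continuous_on UNIV (k n)" for n
    unfolding k_def \<psi>_def by (intro continuous_intros gc)
  have ks: "\<bar>x\<bar> > M + 1 \<Longrightarrow> k n x = 0" for n x by (simp add: k_def \<psi>_def)
  have kb: "\<bar>k n x\<bar> \<le> C" for n x
  proof -
    have "0 \<le> \<psi> x" "\<psi> x \<le> 1" by (auto simp: \<psi>_def)
    moreover have "\<bar>max (-C) (min C (g n x))\<bar> \<le> C" using C0 by auto
    ultimately have "\<bar>\<psi> x\<bar> * \<bar>max (-C) (min C (g n x))\<bar> \<le> 1 * C"
      by (intro mult_mono) auto
    then show ?thesis unfolding k_def abs_mult by simp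
  qed
  have kl: "(\<lambda>n. k n x) \<longlonglongrightarrow> h x" if "x \<notin> N" for x
  proof -
    have "(\<lambda>n. k n x) \<longlonglongrightarrow> \<psi> x * max (-C) (min C (h x))"
      unfolding k_def by (intro tendsto_intros gl that)
    moreover have "\<psi> x * max (-C) (min C (h x)) = h x"
    proof (cases "\<bar>x\<bar> > M")
      case True then show ?thesis using hs[OF True] C0 by simp
    next
      case False then have "\<psi> x = 1" by (simp add: \<psi>_def)
      then show ?thesis using hb[of x] by (simp add: abs_le_iff)
    qed
    ultimately show ?thesis by simp
  qed
  have km: "k n \<in> borel_measurable borel" for n using kc[of n]
    by (simp add: borel_measurable_continuous_onI)
  have "(\<lambda>n. LBINT x. \<bar>h x - k n x\<bar>) \<longlonglongrightarrow> (LBINT (x::real). 0)"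
  proof (rule integral_dominated_convergence[where w="\<lambda>x. 2 * C * indicator {-(M+1)..M+1} x"])
    show "(\<lambda>x. 0::real) \<in> borel_measurable lborel" by simp
    show "(\<lambda>x. \<bar>h x - k n x\<bar>) \<in> borel_measurable lborel" for n
      using hm km[of n] by simp
    show "integrable lborel (\<lambda>x. 2 * C * indicator {- (M + 1)..M + 1} x)"
      by (rule integrable_Icc_ind)
    have "AE x in lebesgue. x \<notin> N" using N
      by (simp add: negligible_iff_null_sets AE_not_in)
    then have "AE x in lborel. x \<notin> N" by (simp add: AE_completion_iff)
    then show "AE x in lborel. (\<lambda>n. \<bar>h x - k n x\<bar>) \<longlonglongrightarrow> 0"
    proof (rule eventually_mono)
      fix x assume "x \<notin> N"
      then have "(\<lambda>n. \<bar>h x - k n x\<bar>) \<longlonglongrightarrow> \<bar>h x - h x\<bar>" by (intro tendsto_intros kl)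
      then show "(\<lambda>n. \<bar>h x - k n x\<bar>) \<longlonglongrightarrow> 0" by simp
    qed
    show "AE x in lborel. norm \<bar>h x - k n x\<bar> \<le> 2 * C * indicator {- (M + 1)..M + 1} x" for n
    proof (rule AE_I2)
      fix x show "norm \<bar>h x - k n x\<bar> \<le> 2 * C * indicator {- (M + 1)..M + 1} x"
      proof (cases "\<bar>x\<bar> > M + 1")
        case True then show ?thesis using hs[of x] ks[of x n] C0 by (simp add: indicator_def)
      next
        case False then have "x \<in> {-(M+1)..M+1}" by auto
        then show ?thesis using hb[of x] kb[of n x] by (simp add: indicator_def abs_le_iff)
      qed
    qed
  qed
  then have lim0: "(\<lambda>n. LBINT x. \<bar>h x - k n x\<bar>) \<longlonglongrightarrow> 0" by simp
  obtain n where "(LBINT x. \<bar>h x - k n x\<bar>) < e"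
    using order_tendstoD(2)[OF lim0 e] by (auto simp: eventually_sequentially)
  then show ?thesis using kc ks kb by blast
qed

lemma cont_cs_bounded:
  fixes g :: "real \<Rightarrow> real"
  assumes gc: "continuous_on UNIV g" and gs: "\<And>x. \<bar>x\<bar> > M \<Longrightarrow> g x = 0"
  shows "\<exists>C. \<forall>x. \<bar>g x\<bar> \<le> C"
proof -
  have "compact (g ` cball 0 M)" by (rule compact_continuous_image) (use gc continuous_on_subset in auto)
  then obtain C where C: "\<forall>y\<in>g ` cball 0 M. norm y \<le> C" using compact_imp_bounded bounded_iff by metis
  show ?thesis
  proof (intro exI allI)
    fix x show "\<bar>g x\<bar> \<le> max C 0"
    proof (cases "\<bar>x\<bar> > M")
      case False then have "x \<in> cball 0 M" by (auto simp: dist_real_def)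
      then have "norm (g x) \<le> C" using C by blast
      then show ?thesis by simp
    qed (use gs in auto)
  qed
qed

lemma cont_cs_unif:
  fixes g :: "real \<Rightarrow> real"
  assumes gc: "continuous_on UNIV g" and gs: "\<And>x. \<bar>x\<bar> > M \<Longrightarrow> g x = 0" and e: "e > 0"
  shows "\<exists>d>0. \<forall>x y. \<bar>x - y\<bar> < d \<longrightarrow> \<bar>g x - g y\<bar> < e"
proof -
  have "uniformly_continuous_on (cball 0 (\<bar>M\<bar>+1)) g"
    by (rule compact_uniformly_continuous) (use gc continuous_on_subset in auto)
  then obtain d where d: "d > 0" "\<And>x y. x \<in> cball 0 (\<bar>M\<bar>+1) \<Longrightarrow> y \<in> cball 0 (\<bar>M\<bar>+1) \<Longrightarrow> dist y x < d \<Longrightarrow> dist (g y) (g x) < e"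
    unfolding uniformly_continuous_on_def using e by metis
  show ?thesis
  proof (intro exI[of _ "min d 1"] conjI allI impI)
    fix x y :: real assume xy: "\<bar>x - y\<bar> < min d 1"
    show "\<bar>g x - g y\<bar> < e"
    proof (cases "\<bar>x\<bar> \<le> \<bar>M\<bar> + 1 \<and> \<bar>y\<bar> \<le> \<bar>M\<bar> + 1")
      case True then show ?thesis using d(2)[of y x] xy by (auto simp: dist_real_def)
    next
      case False then have "\<bar>x\<bar> > M \<and> \<bar>y\<bar> > M" using xy by auto
      then show ?thesis using gs e by auto
    qed
  qed (use d in auto)
qed

lemma abs_mult_le1: "\<bar>a::real\<bar> \<le> C \<Longrightarrow> \<bar>b\<bar> \<le> 1 \<Longrightarrow> \<bar>a * b\<bar> \<le> C"
  by (metis abs_ge_zero abs_mult mult_le_one mult.commute mult_left_le order_trans) 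

lemma RL_cont:
  fixes g :: "real \<Rightarrow> real"
  assumes gc: "continuous_on UNIV g" and gs: "\<And>x. \<bar>x\<bar> > M \<Longrightarrow> g x = 0"
  shows "((\<lambda>L. LBINT w. g w * sin (L * w)) \<longlongrightarrow> 0) at_top"
proof -
  define M' where "M' = \<bar>M\<bar>"
  have gs': "\<bar>x\<bar> > M' \<Longrightarrow> g x = 0" for x using gs[of x] by (auto simp: M'_def)
  have M'0: "M' \<ge> 0" by (simp add: M'_def)
  obtain C where C: "\<And>x. \<bar>g x\<bar> \<le> C" using cont_cs_bounded[OF gc gs] by blast
  have gm: "g \<in> borel_measurable borel" using gc by (simp add: borel_measurable_continuous_onI)
  show ?thesis
  proof (rule tendstoI)
    fix e :: real assume e: "e > 0"
    define e' where "e' = e / (2 * M' + 4)"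
    have e': "e' > 0" using e M'0 by (simp add: e'_def)
    obtain d where d: "d > 0" "\<And>x y. \<bar>x - y\<bar> < d \<Longrightarrow> \<bar>g x - g y\<bar> < e'"
      using cont_cs_unif[OF gc gs' e'] by blast
    show "\<forall>\<^sub>F L in at_top. dist (LBINT w. g w * sin (L * w)) 0 < e"
    proof (rule eventually_mono[OF eventually_gt_at_top[of "pi / min d 1"]])
      fix L :: real assume L: "pi / min d 1 < L"
      have Lpos: "L > 0" using L d(1) by (smt (verit) divide_pos_pos min_def pi_gt_zero)
      define \<delta> where "\<delta> = pi / L"
      have md: "min d 1 > 0" using d(1) by simp
      have "pi < L * min d 1" using L md by (simp add: pos_divide_less_eq)
      then have "\<delta> < min d 1" using Lpos unfolding \<delta>_def by (subst pos_divide_less_eq) (auto simp: mult.commute)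
      then have \<delta>: "\<delta> > 0" "\<delta> < d" "\<delta> < 1"
        using Lpos by (auto simp: \<delta>_def)
      have int1: "integrable lborel (\<lambda>w. g w * sin (L * w))"
        by (rule bcs_integrable[where C=C and M=M']) (use gm C gs' in \<open>auto intro!: abs_mult_le1\<close>)
      have int2: "integrable lborel (\<lambda>w. g (\<delta> + w) * sin (L * w))"
        by (rule bcs_integrable[where C=C and M="M'+1"]) (use gm C gs' \<delta> in \<open>auto intro!: abs_mult_le1\<close>)
      have "(LBINT w. g w * sin (L * w)) = (LBINT w. g (\<delta> + w) * sin (L * (\<delta> + w)))"
        using lborel_integral_real_affine[of 1 "\<lambda>w. g w * sin (L * w)" \<delta>] by simp
      also have "\<dots> = (LBINT w. - (g (\<delta> + w) * sin (L * w)))"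
      proof -
        have "L * (\<delta> + w) = L * w + pi" for w using Lpos by (simp add: \<delta>_def field_simps)
        then show ?thesis by (simp add: sin_periodic_pi)
      qed
      finally have eq: "(LBINT w. g w * sin (L * w)) = - (LBINT w. g (\<delta> + w) * sin (L * w))" by simp
      have "2 * (LBINT w. g w * sin (L * w)) = (LBINT w. (g w - g (\<delta> + w)) * sin (L * w))"
        using eq int1 int2 by (simp add: left_diff_distrib)
      also have "\<bar>\<dots>\<bar> \<le> (LBINT w. \<bar>(g w - g (\<delta> + w)) * sin (L * w)\<bar>)"
        by (rule integral_abs_bound)
      also have "\<dots> \<le> (LBINT w. e' * indicator {-(M'+1)..M'+1} w)"
      proof (rule integral_mono)
        show "integrable lborel (\<lambda>w. \<bar>(g w - g (\<delta> + w)) * sin (L * w)\<bar>)"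
          using int1 int2 by (simp add: left_diff_distrib)
        show "integrable lborel (\<lambda>w. e' * indicator {-(M'+1)..M'+1} w)" by (rule integrable_Icc_ind)
        fix w :: real
        show "\<bar>(g w - g (\<delta> + w)) * sin (L * w)\<bar> \<le> e' * indicator {-(M'+1)..M'+1} w"
        proof (cases "\<bar>w\<bar> > M' + 1")
          case True then show ?thesis using gs'[of w] gs'[of "\<delta> + w"] \<delta> e' by (auto simp: indicator_def)
        next
          case False
          have "\<bar>g w - g (\<delta> + w)\<bar> \<le> e'" using d(2)[of w "\<delta> + w"] \<delta> by auto
          then have "\<bar>(g w - g (\<delta> + w)) * sin (L * w)\<bar> \<le> e'" by (intro abs_mult_le1) auto
          then show ?thesis using False by (auto simp: indicator_def)
        qed
      qed
      also have "\<dots> = e' * (2 * M' + 2)"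
        using M'0 by (simp add: emeasure_lborel_Icc_eq)
      finally have "2 * \<bar>LBINT w. g w * sin (L * w)\<bar> \<le> 2 * (e' * (M' + 1))" by (simp add: abs_mult algebra_simps)
      then have "\<bar>LBINT w. g w * sin (L * w)\<bar> \<le> e' * (M' + 1)" by linarith
      also have "\<dots> < e"
      proof -
        have d4: "0 < 2*M'+4" using M'0 by simp
        have "e * (M'+1) < e * (2*M'+4)" using e M'0 by (intro mult_strict_left_mono) auto
        moreover have "e' * (M'+1) = (e*(M'+1))/(2*M'+4)" by (simp add: e'_def)
        ultimately show ?thesis using d4 by (simp add: pos_divide_less_eq)
      qed
      finally show "dist (LBINT w. g w * sin (L * w)) 0 < e" by simp
    qed
  qed
qed

lemma RL_real:
  fixes h :: "real \<Rightarrow> real"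
  assumes hm: "h \<in> borel_measurable borel" and hb: "\<And>x. \<bar>h x\<bar> \<le> C"
    and hs: "\<And>x. \<bar>x\<bar> > M \<Longrightarrow> h x = 0"
  shows "((\<lambda>L. LBINT w. h w * sin (L * w)) \<longlongrightarrow> 0) at_top"
proof (rule tendstoI)
  fix e :: real assume e: "e > 0"
  obtain g where gc: "continuous_on UNIV g" and gs: "\<forall>x. \<bar>x\<bar> > M + 1 \<longrightarrow> g x = 0"
    and gb: "\<forall>x. \<bar>g x\<bar> \<le> C" and gi: "(LBINT x. \<bar>h x - g x\<bar>) < e/2"
    using density_cont[of h C M "e/2", OF hm hb hs] e by auto
  have gm: "g \<in> borel_measurable borel" using gc by (simp add: borel_measurable_continuous_onI)
  have lim: "((\<lambda>L. LBINT w. g w * sin (L * w)) \<longlongrightarrow> 0) at_top" using RL_cont[OF gc] gs by blast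
  have ev: "\<forall>\<^sub>F L in at_top. dist (LBINT w. g w * sin (L * w)) 0 < e/2"
    using tendstoD[OF lim, of "e/2"] e by simp
  show "\<forall>\<^sub>F L in at_top. dist (LBINT w. h w * sin (L * w)) 0 < e"
  proof (rule eventually_mono[OF ev])
    fix L assume L: "dist (LBINT w. g w * sin (L * w)) 0 < e/2"
    have i1: "integrable lborel (\<lambda>w. h w * sin (L * w))"
      by (rule bcs_integrable[where C=C and M=M]) (use hm hb hs in \<open>auto intro!: abs_mult_le1\<close>)
    have i2: "integrable lborel (\<lambda>w. g w * sin (L * w))"
      by (rule bcs_integrable[where C=C and M="M+1"]) (use gm gb gs in \<open>auto intro!: abs_mult_le1\<close>)
    have hg: "\<bar>\<bar>h x - g x\<bar>\<bar> \<le> 2*C" for x using hb[of x] spec[OF gb, of x] by linarith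
    have i3: "integrable lborel (\<lambda>w. \<bar>h w - g w\<bar>)"
      by (rule bcs_integrable[where C="2*C" and M="M+1"]) (use hm gm hg gs hs in auto)
    have "(LBINT w. h w * sin (L * w)) = (LBINT w. (h w - g w) * sin (L * w)) + (LBINT w. g w * sin (L * w))"
      using i1 i2 by (simp add: left_diff_distrib)
    moreover have "\<bar>LBINT w. (h w - g w) * sin (L * w)\<bar> \<le> (LBINT w. \<bar>h w - g w\<bar>)"
    proof -
      have "\<bar>LBINT w. (h w - g w) * sin (L * w)\<bar> \<le> (LBINT w. \<bar>(h w - g w) * sin (L * w)\<bar>)"
        by (rule integral_abs_bound)
      also have "\<dots> \<le> (LBINT w. \<bar>h w - g w\<bar>)"
      proof (rule integral_mono)
        show "integrable lborel (\<lambda>w. \<bar>(h w - g w) * sin (L * w)\<bar>)"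
          using i1 i2 by (simp add: left_diff_distrib)
      qed (use i3 in \<open>auto intro!: abs_mult_le1\<close>)
      finally show ?thesis .
    qed
    ultimately show "dist (LBINT w. h w * sin (L * w)) 0 < e" using L gi by (simp add: dist_real_def)
  qed
qed

lemma cbcs_integrable:
  fixes B :: "real \<Rightarrow> complex"
  assumes "B \<in> borel_measurable borel" "\<And>x. cmod (B x) \<le> C" "\<And>x. \<bar>x\<bar> > M \<Longrightarrow> B x = 0"
  shows "integrable lborel B"
proof (rule Bochner_Integration.integrable_bound[OF integrable_Icc_ind[of C "-M" M]])
  show "B \<in> borel_measurable lborel" using assms(1) by simp
  show "AE x in lborel. norm (B x) \<le> norm (C * indicator {- M..M} x)"
  proof (rule AE_I2)
    fix x show "norm (B x) \<le> norm (C * indicator {- M..M} x)"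
      using assms(2)[of x] assms(3)[of x] by (cases "\<bar>x\<bar> > M") (auto simp: indicator_def)
  qed
qed

lemma sin_div_bound: fixes L w :: real shows "\<bar>2 * sin (L * w) / w\<bar> \<le> 2 * \<bar>L\<bar>"
proof (cases "w = 0")
  case False
  have "\<bar>sin (L * w)\<bar> \<le> \<bar>L * w\<bar>" by (rule abs_sin_x_le_abs_x)
  then show ?thesis using False by (simp add: abs_mult divide_le_eq)
qed simp

lemma cos_int_sym:
  fixes L w :: real
  assumes "w \<noteq> 0" "0 \<le> L"
  shows "(LBINT x:{-L..L}. cos (x * w)) = 2 * sin (L * w) / w"
proof -
  have "(LBINT x:{-L..L}. cos (x * w)) = (LBINT x=-L..L. cos (x * w))"
    using assms by (simp add: interval_integral_Icc)
  also have "\<dots> = sin (L * w) / w - sin (-L * w) / w"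
    by (rule interval_integral_FTC_finite)
       (use assms in \<open>auto intro!: continuous_intros derivative_eq_intros
         simp: has_real_derivative_iff_has_vector_derivative[symmetric]\<close>)
  finally show ?thesis by simp
qed

lemma sin_int_sym:
  fixes L w :: real
  assumes "w \<noteq> 0" "0 \<le> L"
  shows "(LBINT x:{-L..L}. sin (x * w)) = 0"
proof -
  have "(LBINT x:{-L..L}. sin (x * w)) = (LBINT x=-L..L. sin (x * w))"
    using assms by (simp add: interval_integral_Icc)
  also have "\<dots> = (- cos (L * w) / w) - (- cos (-L * w) / w)"
    by (rule interval_integral_FTC_finite)
       (use assms in \<open>auto intro!: continuous_intros derivative_eq_intros
         simp: has_real_derivative_iff_has_vector_derivative[symmetric]\<close>)
  finally show ?thesis by simp
qed

lemma dk:
  fixes L w :: real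
  assumes "w \<noteq> 0" "0 \<le> L"
  shows "(LINT x:{-L..L}|lborel. cis (x * w)) = complex_of_real (2 * sin (L * w) / w)"
proof -
  have si: "set_integrable lborel {-L..L} (\<lambda>x. cis (x * w))"
    by (rule borel_integrable_atLeastAtMost') (auto intro!: continuous_intros)
  then have ii: "integrable lborel (\<lambda>x. indicator {-L..L} x *\<^sub>R cis (x * w))"
    by (simp add: set_integrable_def)
  have "Re (LINT x:{-L..L}|lborel. cis (x * w)) = (LBINT x:{-L..L}. cos (x * w))"
    unfolding set_lebesgue_integral_def using integral_Re[OF ii, symmetric] by (simp add: cos_of_real)
  moreover have "Im (LINT x:{-L..L}|lborel. cis (x * w)) = (LBINT x:{-L..L}. sin (x * w))"
    unfolding set_lebesgue_integral_def using integral_Im[OF ii, symmetric] by simp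
  ultimately show ?thesis using cos_int_sym[OF assms] sin_int_sym[OF assms]
    by (simp add: complex_eq_iff)
qed

lemma si_sym:
  fixes L :: real
  assumes "L > 0"
  shows "(LBINT w. indicator {-1..1} w * (2 * sin (L * w) / w)) = 4 * Si L"
proof -
  define g where "g w = sin (w * L) / w" for w
  have gb: "\<bar>g w\<bar> \<le> L" for w
  proof (cases "w = 0")
    case False
    have "\<bar>sin (w * L)\<bar> \<le> L * \<bar>w\<bar>" using abs_sin_x_le_abs_x[of "w*L"] assms by (simp add: abs_mult mult.commute)
    then show ?thesis using False by (simp add: g_def abs_divide pos_divide_le_eq)
  qed (use assms in \<open>simp add: g_def\<close>)
  have gm: "g \<in> borel_measurable borel" unfolding g_def by measurable
  have int: "integrable lborel (\<lambda>w. indicator {a..b} w * g w)" for a b :: real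
    by (rule bcs_integrable[where C=L and M="\<bar>a\<bar>+\<bar>b\<bar>"]) (use gm gb assms in \<open>auto simp: indicator_def abs_mult\<close>)
  have pos: "(LBINT w. indicator {0..1} w * g w) = Si L"
  proof -
    have "(LBINT t=ereal 0..ereal 1. sin (t * L) / t) = Si L"
      using LBINT_I0c_sin_scale_divide[of 1 L] assms by (simp add: zero_ereal_def)
    then have "(LBINT t:{0..1}. sin (t * L) / t) = Si L" by (simp add: interval_integral_Icc)
    then show ?thesis unfolding set_lebesgue_integral_def g_def by simp
  qed
  have neg: "(LBINT w. indicator {-1..0} w * g w) = (LBINT w. indicator {0..1} w * g w)"
  proof -
    have "(LBINT w. indicator {-1..0} w * g w) = (LBINT x. indicator {-1..0} (-x) * g (-x))"
      using lborel_integral_real_affine[of "-1" "\<lambda>w. indicator {-1..0} w * g w" 0] by simp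
    also have "\<dots> = (LBINT w. indicator {0..1} w * g w)"
      by (rule Bochner_Integration.integral_cong) (auto simp: indicator_def g_def)
    finally show ?thesis .
  qed
  have split: "indicator {-1..1} w * (2 * sin (L * w) / w) = 2 * (indicator {-1..0} w * g w + indicator {0..1} w * g w)" for w :: real
    by (cases "w = 0") (auto simp: indicator_def g_def mult.commute)
  have "(LBINT w. indicator {-1..1} w * (2 * sin (L * w) / w)) = 2 * ((LBINT w. indicator {-1..0} w * g w) + (LBINT w. indicator {0..1} w * g w))"
    unfolding split using int by simp
  then show ?thesis using pos neg by simp
qed

lemma borel_measurable_cis[measurable]: "cis \<in> borel_measurable borel"
proof -
  have "continuous_on UNIV (\<lambda>x::real. cis x)" by (intro continuous_intros)
  then show ?thesis by (simp add: borel_measurable_continuous_onI)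
qed

definition IF :: "(real \<Rightarrow> complex) \<Rightarrow> real \<Rightarrow> complex" where
  "IF B x = (LINT \<zeta>|lborel. B \<zeta> * cis (x * \<zeta>)) / (2 * pi)"

definition nice :: "(real \<Rightarrow> complex) \<Rightarrow> bool" where
  "nice B \<longleftrightarrow> B \<in> borel_measurable borel \<and> (\<exists>C. \<forall>\<zeta>. cmod (B \<zeta>) \<le> C) \<and> (\<exists>M. \<forall>\<zeta>. \<bar>\<zeta>\<bar> > M \<longrightarrow> B \<zeta> = 0)"

lemma niceI: "B \<in> borel_measurable borel \<Longrightarrow> (\<And>\<zeta>. cmod (B \<zeta>) \<le> C) \<Longrightarrow> (\<And>\<zeta>. \<bar>\<zeta>\<bar> > M \<Longrightarrow> B \<zeta> = 0) \<Longrightarrow> nice B"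
  unfolding nice_def by blast

lemma niceE: assumes "nice B" obtains C M where "B \<in> borel_measurable borel" "\<And>\<zeta>. cmod (B \<zeta>) \<le> C"
  "\<And>\<zeta>. \<bar>\<zeta>\<bar> > M \<Longrightarrow> B \<zeta> = 0" "0 \<le> C" "0 \<le> M"
proof -
  obtain C M where "B \<in> borel_measurable borel" "\<And>\<zeta>. cmod (B \<zeta>) \<le> C" "\<And>\<zeta>. \<bar>\<zeta>\<bar> > M \<Longrightarrow> B \<zeta> = 0"
    using assms unfolding nice_def by blast
  moreover have "0 \<le> C" using calculation(2)[of 0] norm_ge_zero order_trans by blast
  moreover have "\<And>\<zeta>. \<bar>\<zeta>\<bar> > max M 0 \<Longrightarrow> B \<zeta> = 0" using calculation(3) by auto
  ultimately show ?thesis using that[of C "max M 0"] by auto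
qed

lemma nice_mult:
  assumes "nice B" "m \<in> borel_measurable borel" "\<And>\<zeta>. cmod (m \<zeta>) \<le> D"
  shows "nice (\<lambda>\<zeta>. m \<zeta> * B \<zeta>)"
proof -
  obtain C M where B: "B \<in> borel_measurable borel" "\<And>\<zeta>. cmod (B \<zeta>) \<le> C"
    "\<And>\<zeta>. \<bar>\<zeta>\<bar> > M \<Longrightarrow> B \<zeta> = 0" "0 \<le> C" using niceE[OF assms(1)] by metis
  show ?thesis
  proof (rule niceI[where C="D * C" and M=M])
    show "(\<lambda>\<zeta>. m \<zeta> * B \<zeta>) \<in> borel_measurable borel" using B(1) assms(2) by measurable
    show "cmod (m \<zeta> * B \<zeta>) \<le> D * C" for \<zeta>
      unfolding norm_mult by (rule mult_mono) (use assms(3) B order_trans[OF norm_ge_zero assms(3)] in auto)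
  qed (use B in auto)
qed

lemma nice_integrable: "nice B \<Longrightarrow> integrable lborel B"
  by (metis niceE cbcs_integrable)

lemma nice_cis: "nice B \<Longrightarrow> nice (\<lambda>\<zeta>. B \<zeta> * cis (x * \<zeta>))"
proof -
  have "(\<lambda>\<zeta>. cis (x * \<zeta>)) \<in> borel_measurable borel" by measurable
  moreover assume "nice B"
  ultimately show ?thesis using nice_mult[of B "\<lambda>\<zeta>. cis (x * \<zeta>)" 1] by (simp add: mult.commute)
qed

lemma ifourier_nice:
  assumes "nice B" shows "ifourier B x = IF B x"
proof -
  obtain C M where B: "B \<in> borel_measurable borel" "\<And>\<zeta>. \<bar>\<zeta>\<bar> > M \<Longrightarrow> B \<zeta> = 0"
    using niceE[OF assms] by metis
  have "((\<lambda>R. LINT \<xi>:{-R..R}|lborel. B \<xi> * cis (x * \<xi>)) \<longlongrightarrow> (LINT \<xi>|lborel. B \<xi> * cis (x * \<xi>))) at_top"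
  proof (rule tendsto_eventually)
    show "\<forall>\<^sub>F R in at_top. (LINT \<xi>:{-R..R}|lborel. B \<xi> * cis (x * \<xi>)) = (LINT \<xi>|lborel. B \<xi> * cis (x * \<xi>))"
    proof (rule eventually_mono[OF eventually_ge_at_top[of M]])
      fix R assume R: "M \<le> R"
      show "(LINT \<xi>:{-R..R}|lborel. B \<xi> * cis (x * \<xi>)) = (LINT \<xi>|lborel. B \<xi> * cis (x * \<xi>))"
        unfolding set_lebesgue_integral_def
        by (rule Bochner_Integration.integral_cong) (use R B(2) in \<open>auto simp: indicator_def\<close>)
    qed
  qed
  then show ?thesis unfolding ifourier_def IF_def by (simp add: tendsto_Lim)
qed

lemma fourier_IF_step1:
  assumes "nice B" "0 \<le> L"
  shows "(LINT x:{-L..L}|lborel. IF B x * cis (-(x*\<xi>))) = (LINT w|lborel. B (\<xi> + w) * complex_of_real (2 * sin (L*w) / w)) / (2*pi)"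
proof -
  obtain C M where Bm[measurable]: "B \<in> borel_measurable borel" and Bb: "\<And>\<zeta>. cmod (B \<zeta>) \<le> C"
    and Bs: "\<And>\<zeta>. \<bar>\<zeta>\<bar> > M \<Longrightarrow> B \<zeta> = 0" and C0: "0 \<le> C" using niceE[OF assms(1)] by metis
  define F where "F x \<zeta> = indicator {-L..L} x *\<^sub>R (B \<zeta> * cis (x * (\<zeta> - \<xi>)))" for x \<zeta>
  have intF: "integrable (lborel \<Otimes>\<^sub>M lborel) (\<lambda>(x,\<zeta>). F x \<zeta>)"
  proof (rule Bochner_Integration.integrable_bound[where f="\<lambda>p. C * indicator ({-L..L} \<times> {-M..M}) p"])
    show "integrable (lborel \<Otimes>\<^sub>M lborel) (\<lambda>p. C * indicator ({-L..L} \<times> {-M..M}) p)"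
      by (intro integrable_mult_right integrable_real_indicator)
         (auto simp: lborel.emeasure_pair_measure_Times emeasure_lborel_Icc_eq ennreal_mult_less_top)
    show "(\<lambda>(x,\<zeta>). F x \<zeta>) \<in> borel_measurable (lborel \<Otimes>\<^sub>M lborel)" unfolding F_def by measurable
    show "AE p in lborel \<Otimes>\<^sub>M lborel. norm ((\<lambda>(x,\<zeta>). F x \<zeta>) p) \<le> norm (C * indicator ({-L..L} \<times> {-M..M}) p)"
    proof (rule AE_I2, clarify)
      fix x \<zeta> :: real
      show "norm (F x \<zeta>) \<le> norm (C * indicator ({-L..L} \<times> {-M..M}) (x, \<zeta>))"
        using Bb[of \<zeta>] Bs[of \<zeta>] C0 by (auto simp: F_def indicator_def norm_mult)
    qed
  qed
  have "(LINT x:{-L..L}|lborel. IF B x * cis (-(x*\<xi>))) = (LINT x|lborel. (LINT \<zeta>|lborel. F x \<zeta>) / (2*pi))"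
    unfolding set_lebesgue_integral_def
  proof (rule Bochner_Integration.integral_cong[OF refl])
    fix x
    have "IF B x * cis (-(x*\<xi>)) = (LINT \<zeta>|lborel. B \<zeta> * cis (x * \<zeta>) * cis (-(x*\<xi>))) / (2*pi)"
      unfolding IF_def by simp
    also have "\<dots> = (LINT \<zeta>|lborel. B \<zeta> * cis (x * (\<zeta> - \<xi>))) / (2*pi)"
      by (simp add: cis_mult mult.assoc right_diff_distrib)
    finally show "indicator {-L..L} x *\<^sub>R (IF B x * cis (-(x*\<xi>))) = (LINT \<zeta>|lborel. F x \<zeta>) / (2*pi)"
      unfolding F_def by (simp add: scaleR_conv_of_real)
  qed
  also have "\<dots> = (LINT x|lborel. LINT \<zeta>|lborel. F x \<zeta>) / (2*pi)" by simp
  also have "(LINT x|lborel. LINT \<zeta>|lborel. F x \<zeta>) = (LINT \<zeta>|lborel. LINT x|lborel. F x \<zeta>)"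
    using lborel_pair.Fubini_integral[OF intF] by simp
  also have "\<dots> = (LINT \<zeta>|lborel. B \<zeta> * complex_of_real (2 * sin (L*(\<zeta> - \<xi>)) / (\<zeta> - \<xi>)))"
  proof (rule integral_discrete_difference[where X="{\<xi>}"])
    fix \<zeta> assume "\<zeta> \<notin> {\<xi>}"
    then have "\<zeta> - \<xi> \<noteq> 0" by simp
    have "(LINT x|lborel. F x \<zeta>) = B \<zeta> * (LINT x:{-L..L}|lborel. cis (x * (\<zeta> - \<xi>)))"
      unfolding F_def set_lebesgue_integral_def by (simp add: mult.commute mult.left_commute scaleR_conv_of_real)
    then show "(LINT x|lborel. F x \<zeta>) = B \<zeta> * complex_of_real (2 * sin (L*(\<zeta> - \<xi>)) / (\<zeta> - \<xi>))"
      using dk[OF \<open>\<zeta> - \<xi> \<noteq> 0\<close> assms(2)] by simp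
  qed auto
  also have "\<dots> = (LINT w|lborel. B (\<xi> + w) * complex_of_real (2 * sin (L*w) / w))"
    using lborel_integral_real_affine[of 1 "\<lambda>\<zeta>. B \<zeta> * complex_of_real (2 * sin (L*(\<zeta> - \<xi>)) / (\<zeta> - \<xi>))" \<xi>]
    by simp
  finally show ?thesis .
qed

lemma complex_RL:
  fixes h :: "real \<Rightarrow> complex"
  assumes hm: "h \<in> borel_measurable borel" and hb: "\<And>x. cmod (h x) \<le> C"
    and hs: "\<And>x. \<bar>x\<bar> > M \<Longrightarrow> h x = 0"
  shows "((\<lambda>L. LINT w|lborel. h w * complex_of_real (sin (L * w))) \<longlongrightarrow> 0) at_top"
proof -
  have hmr[measurable]: "(\<lambda>x. Re (h x)) \<in> borel_measurable borel" "(\<lambda>x. Im (h x)) \<in> borel_measurable borel"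
    using hm by measurable
  have r: "((\<lambda>L. LBINT w. Re (h w) * sin (L * w)) \<longlongrightarrow> 0) at_top"
    by (rule RL_real[where C=C and M=M]) (use hs in \<open>auto intro: order_trans[OF abs_Re_le_cmod hb]\<close>)
  have i: "((\<lambda>L. LBINT w. Im (h w) * sin (L * w)) \<longlongrightarrow> 0) at_top"
    by (rule RL_real[where C=C and M=M]) (use hs in \<open>auto intro: order_trans[OF abs_Im_le_cmod hb]\<close>)
  have eq: "(LINT w|lborel. h w * complex_of_real (sin (L * w))) =
      complex_of_real (LBINT w. Re (h w) * sin (L * w)) + \<i> * complex_of_real (LBINT w. Im (h w) * sin (L * w))" for L
  proof -
    have int: "integrable lborel (\<lambda>w. h w * complex_of_real (sin (L * w)))"
    proof (rule cbcs_integrable[where C=C and M=M])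
      show "(\<lambda>w. h w * complex_of_real (sin (L * w))) \<in> borel_measurable borel" using hm by measurable
      show "cmod (h w * complex_of_real (sin (L * w))) \<le> C" for w
        unfolding norm_mult norm_of_real by (rule order_trans[OF mult_left_le]) (use hb in auto)
    qed (use hs in auto)
    show ?thesis
      using integral_Re[OF int] integral_Im[OF int] by (simp add: complex_eq_iff)
  qed
  have "((\<lambda>L. complex_of_real (LBINT w. Re (h w) * sin (L * w)) + \<i> * complex_of_real (LBINT w. Im (h w) * sin (L * w))) \<longlongrightarrow>
     complex_of_real 0 + \<i> * complex_of_real 0) at_top"
    by (intro tendsto_intros r i)
  then show ?thesis unfolding eq by simp
qed

lemma fourier_IF:
  assumes "nice B" and lip: "\<And>\<zeta>. cmod (B \<zeta> - B \<xi>) \<le> K * \<bar>\<zeta> - \<xi>\<bar>"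
  shows "fourier (IF B) \<xi> = B \<xi>"
proof -
  obtain C M where Bm[measurable]: "B \<in> borel_measurable borel" and Bb: "\<And>\<zeta>. cmod (B \<zeta>) \<le> C"
    and Bs: "\<And>\<zeta>. \<bar>\<zeta>\<bar> > M \<Longrightarrow> B \<zeta> = 0" and C0: "0 \<le> C" and M0: "0 \<le> M" using niceE[OF assms(1)] by metis
  define h where "h w = (B (\<xi> + w) - B \<xi> * indicator {-1..1} w) / complex_of_real w" for w
  have hm[measurable]: "h \<in> borel_measurable borel" unfolding h_def by measurable
  have hb: "cmod (h w) \<le> \<bar>K\<bar> + C" for w
  proof (cases "w = 0")
    case True then show ?thesis using C0 by (simp add: h_def)
  next
    case False
    show ?thesis
    proof (cases "\<bar>w\<bar> \<le> 1")
      case True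
      then have "w \<in> {-1..1}" by auto
      then have "cmod (h w) = cmod (B (\<xi> + w) - B \<xi>) / \<bar>w\<bar>" by (simp add: h_def norm_divide)
      also have "\<dots> \<le> K" using lip[of "\<xi> + w"] False by (simp add: pos_divide_le_eq)
      finally show ?thesis using C0 by linarith
    next
      case False
      then have "w \<notin> {-1..1}" by auto
      then have "cmod (h w) = cmod (B (\<xi> + w)) / \<bar>w\<bar>" by (simp add: h_def norm_divide)
      also have "\<dots> \<le> cmod (B (\<xi> + w))"
        using False mult_left_mono[of 1 "\<bar>w\<bar>" "cmod (B (\<xi> + w))"] by (simp add: divide_le_eq)
      finally show ?thesis using Bb[of "\<xi> + w"] by linarith
    qed
  qed
  have hs: "h w = 0" if w: "\<bar>w\<bar> > M + \<bar>\<xi>\<bar> + 1" for w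
  proof -
    have "M < \<bar>\<xi> + w\<bar>" using w by arith
    moreover have "w \<notin> {-1..1}" using w M0 by auto
    ultimately show ?thesis using Bs[of "\<xi> + w"] by (simp add: h_def)
  qed
  have decomp: "B (\<xi> + w) * complex_of_real (2 * sin (L * w) / w) =
      B \<xi> * complex_of_real (indicator {-1..1} w * (2 * sin (L * w) / w)) + 2 * (h w * complex_of_real (sin (L * w)))" for L w
  proof (cases "w = 0")
    case False then show ?thesis by (simp add: h_def field_simps indicator_def)
  qed (simp add: h_def)
  have T: "(LINT x:{-L..L}|lborel. IF B x * cis (-(x*\<xi>))) =
      (B \<xi> * complex_of_real (4 * Si L) + 2 * (LINT w|lborel. h w * complex_of_real (sin (L * w)))) / (2*pi)"
    if L: "L > 0" for L
  proof -
    have ib: "\<bar>indicator {-1..1} w * (2 * sin (L * w) / w)\<bar> \<le> 2 * \<bar>L\<bar>" for w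
      using sin_div_bound[of L w] L by (auto simp: indicator_def)
    have I1: "integrable lborel (\<lambda>w. B \<xi> * complex_of_real (indicator {-1..1} w * (2 * sin (L * w) / w)))"
    proof (rule cbcs_integrable[where C="C * (2 * \<bar>L\<bar>)" and M=1])
      show "(\<lambda>w. B \<xi> * complex_of_real (indicator {-1..1} w * (2 * sin (L * w) / w))) \<in> borel_measurable borel"
        by measurable
      show "cmod (B \<xi> * complex_of_real (indicator {-1..1} w * (2 * sin (L * w) / w))) \<le> C * (2 * \<bar>L\<bar>)" for w
        unfolding norm_mult norm_of_real by (rule mult_mono) (use Bb ib C0 in auto)
    qed (auto simp: indicator_def)
    have I2: "integrable lborel (\<lambda>w. 2 * (h w * complex_of_real (sin (L * w))))"
    proof (rule cbcs_integrable[where C="2 * (\<bar>K\<bar> + C)" and M="M + \<bar>\<xi>\<bar> + 1"])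
      show "cmod (2 * (h w * complex_of_real (sin (L * w)))) \<le> 2 * (\<bar>K\<bar> + C)" for w
      proof -
        have "cmod (h w) * \<bar>sin (L * w)\<bar> \<le> (\<bar>K\<bar> + C) * 1"
          by (rule mult_mono) (use hb[of w] C0 in auto)
        then show ?thesis unfolding norm_mult norm_of_real by simp
      qed
    qed (use hs in auto)
    have "(LINT x:{-L..L}|lborel. IF B x * cis (-(x*\<xi>))) = (LINT w|lborel. B (\<xi> + w) * complex_of_real (2 * sin (L*w) / w)) / (2*pi)"
      using fourier_IF_step1[OF assms(1)] L by simp
    also have "(LINT w|lborel. B (\<xi> + w) * complex_of_real (2 * sin (L*w) / w)) =
      (LINT w|lborel. B \<xi> * complex_of_real (indicator {-1..1} w * (2 * sin (L * w) / w)) + 2 * (h w * complex_of_real (sin (L * w))))"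
      unfolding decomp ..
    also have "\<dots> = (LINT w|lborel. B \<xi> * complex_of_real (indicator {-1..1} w * (2 * sin (L * w) / w))) + (LINT w|lborel. 2 * (h w * complex_of_real (sin (L * w))))"
      by (rule Bochner_Integration.integral_add[OF I1 I2])
    also have "(LINT w|lborel. B \<xi> * complex_of_real (indicator {-1..1} w * (2 * sin (L * w) / w))) =
       B \<xi> * complex_of_real (LBINT w. indicator {-1..1} w * (2 * sin (L * w) / w))"
      by (simp only: integral_mult_right_zero integral_complex_of_real)
    also have "(LINT w|lborel. 2 * (h w * complex_of_real (sin (L * w)))) = 2 * (LINT w|lborel. h w * complex_of_real (sin (L * w)))"
      by (simp only: integral_mult_right_zero)
    also have "(LBINT w. indicator {-1..1} w * (2 * sin (L * w) / w)) = 4 * Si L" by (rule si_sym[OF L])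
    finally show ?thesis .
  qed
  have lim: "((\<lambda>L. (B \<xi> * complex_of_real (4 * Si L) + 2 * (LINT w|lborel. h w * complex_of_real (sin (L * w)))) / (2*pi))
      \<longlongrightarrow> (B \<xi> * complex_of_real (4 * (pi/2)) + 2 * 0) / (2*pi)) at_top"
    by (intro tendsto_intros Si_at_top complex_RL[where C="\<bar>K\<bar> + C" and M="M + \<bar>\<xi>\<bar> + 1"] hm hb hs) auto
  have "((\<lambda>L. LINT x:{-L..L}|lborel. IF B x * cis (-(x*\<xi>))) \<longlongrightarrow> B \<xi>) at_top"
  proof -
    have e: "(B \<xi> * complex_of_real (4 * (pi/2)) + 2 * 0) / (2*pi) = B \<xi>" by simp
    show ?thesis
  proof (rule Lim_transform_eventually[OF lim[unfolded e]])
    show "\<forall>\<^sub>F L in at_top. (B \<xi> * complex_of_real (4 * Si L) + 2 * (LINT w|lborel. h w * complex_of_real (sin (L * w)))) / (2*pi) =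
      (LINT x:{-L..L}|lborel. IF B x * cis (-(x*\<xi>)))"
      using eventually_gt_at_top[of 0] by eventually_elim (simp add: T)
  qed
  qed
  then show ?thesis unfolding fourier_def by (simp add: tendsto_Lim)
qed

lemma cis_diff_le: "cmod (cis a - cis b) \<le> \<bar>a - b\<bar>"
proof -
  have "cmod (cis (a - b) - 1) \<le> \<bar>a - b\<bar>"
    using iexp_approx1[of "a - b" 0] by (simp add: cis_conv_exp)
  moreover have "cis a - cis b = cis b * (cis (a - b) - 1)"
    by (simp add: right_diff_distrib cis_mult)
  ultimately show ?thesis by (simp add: norm_mult)
qed

lemma cis_minus_one_le: "cmod (cis a - 1) \<le> \<bar>a\<bar>"
  using cis_diff_le[of a 0] by simp

lemma dispersion_bound: "\<bar>dispersion u\<bar> \<le> 1/2"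
proof -
  have "0 \<le> (\<bar>u\<bar> - 1)\<^sup>2" by simp
  then have "2 * \<bar>u\<bar> \<le> 1 + u\<^sup>2" by (simp add: power2_eq_square algebra_simps abs_mult_self_eq)
  then show ?thesis by (simp add: dispersion_def abs_divide divide_le_eq add_pos_nonneg)
qed

lemma dispersion_lip: "\<bar>dispersion u - dispersion v\<bar> \<le> \<bar>u - v\<bar>"
proof -
  have pu: "1 + u\<^sup>2 > 0" and pv: "1 + v\<^sup>2 > 0" by (auto intro: add_pos_nonneg)
  have eq: "dispersion u - dispersion v = (u - v) * (1 - u * v) / ((1 + u\<^sup>2) * (1 + v\<^sup>2))"
    using pu pv by (simp add: dispersion_def field_simps power2_eq_square)
  have "\<bar>1 - u * v\<bar> \<le> (1 + u\<^sup>2) * (1 + v\<^sup>2)"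
  proof -
    have "0 \<le> (\<bar>u\<bar> - \<bar>v\<bar>)\<^sup>2" by simp
    then have "2 * \<bar>u * v\<bar> \<le> u\<^sup>2 + v\<^sup>2" by (simp add: power2_eq_square algebra_simps abs_mult_self_eq abs_mult)
    moreover have "0 \<le> u\<^sup>2 * v\<^sup>2" by simp
    moreover have "\<bar>1 - u * v\<bar> \<le> 1 + \<bar>u * v\<bar>" by linarith
    moreover have "0 \<le> \<bar>u * v\<bar>" by simp
    ultimately have "\<bar>1 - u * v\<bar> \<le> 1 + u\<^sup>2 + v\<^sup>2 + u\<^sup>2 * v\<^sup>2" by linarith
    then show ?thesis by (simp add: algebra_simps)
  qed
  then have "\<bar>(1 - u * v) / ((1 + u\<^sup>2) * (1 + v\<^sup>2))\<bar> \<le> 1"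
    using pu pv by (simp add: abs_divide abs_mult divide_le_eq)
  then have "\<bar>u - v\<bar> * \<bar>(1 - u * v) / ((1 + u\<^sup>2) * (1 + v\<^sup>2))\<bar> \<le> \<bar>u - v\<bar> * 1"
    by (intro mult_left_mono) auto
  then show ?thesis unfolding eq by (simp add: abs_mult)
qed

lemma dispersion_measurable[measurable]: "dispersion \<in> borel_measurable borel"
  unfolding dispersion_def by measurable

lemma fmult_IF:
  assumes "nice B" "countable E" "\<And>\<xi>. \<xi> \<notin> E \<Longrightarrow> fourier f \<xi> = B \<xi>"
    "m \<in> borel_measurable borel" "\<And>\<xi>. cmod (m \<xi>) \<le> D"
  shows "fmult m f = IF (\<lambda>\<xi>. m \<xi> * B \<xi>)"
proof (rule ext)
  fix x
  have "(\<lambda>R. LINT \<xi>:{-R..R}|lborel. m \<xi> * fourier f \<xi> * cis (x * \<xi>)) = (\<lambda>R. LINT \<xi>:{-R..R}|lborel. m \<xi> * B \<xi> * cis (x * \<xi>))"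
    unfolding set_lebesgue_integral_def by (intro ext integral_discrete_difference[where X=E]) (auto simp: assms(2,3))
  then have "fmult m f x = ifourier (\<lambda>\<xi>. m \<xi> * B \<xi>) x" unfolding fmult_def ifourier_def by simp
  also have "\<dots> = IF (\<lambda>\<xi>. m \<xi> * B \<xi>) x" by (rule ifourier_nice[OF nice_mult[OF assms(1,4,5)]])
  finally show "fmult m f x = IF (\<lambda>\<xi>. m \<xi> * B \<xi>) x" .
qed

definition B0 :: "real \<Rightarrow> real \<Rightarrow> real \<Rightarrow> complex" where
  "B0 N R \<xi> = complex_of_real (R * indicator (I_N N) \<xi>)"

lemma I_N_sets[measurable]: "I_N N \<in> sets borel"
  unfolding I_N_def by simp

lemma B0_measurable[measurable]: "B0 N R \<in> borel_measurable borel"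
  unfolding B0_def by measurable

lemma nice_B0: "nice (B0 N R)"
proof (rule niceI[where C="\<bar>R\<bar>" and M="\<bar>N\<bar> + 1"])
  show "cmod (B0 N R \<zeta>) \<le> \<bar>R\<bar>" for \<zeta> by (simp add: B0_def indicator_def)
  show "B0 N R \<zeta> = 0" if "\<bar>\<zeta>\<bar> > \<bar>N\<bar> + 1" for \<zeta>
  proof -
    have "\<zeta> \<notin> I_N N" using that by (auto simp: I_N_def)
    then show ?thesis by (simp add: B0_def)
  qed
qed simp

lemma phi0_IF: "phi0 N R = IF (B0 N R)"
  using ifourier_nice[OF nice_B0] unfolding phi0_def B0_def[abs_def] by (intro ext) simp

lemma side_lemma:
  fixes \<zeta> \<xi> e :: real
  assumes "\<bar>\<zeta> - \<xi>\<bar> < \<bar>\<xi> - e\<bar>"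
  shows "(\<zeta> \<le> e \<longleftrightarrow> \<xi> \<le> e)" "(e \<le> \<zeta> \<longleftrightarrow> e \<le> \<xi>)"
  using assms by arith+

definition EN :: "real \<Rightarrow> real set" where "EN N = {-N-1, -N+1, N-1, N+1}"

lemma B0_lip_at:
  assumes "\<xi> \<notin> EN N"
  shows "\<exists>K. \<forall>\<zeta>. cmod (B0 N R \<zeta> - B0 N R \<xi>) \<le> K * \<bar>\<zeta> - \<xi>\<bar>"
proof -
  define d where "d = min (min \<bar>\<xi> - (-N-1)\<bar> \<bar>\<xi> - (-N+1)\<bar>) (min \<bar>\<xi> - (N-1)\<bar> \<bar>\<xi> - (N+1)\<bar>)"
  have d: "d > 0" using assms by (auto simp: d_def EN_def)
  show ?thesis
  proof (intro exI allI)
    fix \<zeta>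
    show "cmod (B0 N R \<zeta> - B0 N R \<xi>) \<le> \<bar>R\<bar> / d * \<bar>\<zeta> - \<xi>\<bar>"
    proof (cases "\<bar>\<zeta> - \<xi>\<bar> < d")
      case True
      then have "\<bar>\<zeta> - \<xi>\<bar> < \<bar>\<xi> - (-N-1)\<bar>" "\<bar>\<zeta> - \<xi>\<bar> < \<bar>\<xi> - (-N+1)\<bar>"
        "\<bar>\<zeta> - \<xi>\<bar> < \<bar>\<xi> - (N-1)\<bar>" "\<bar>\<zeta> - \<xi>\<bar> < \<bar>\<xi> - (N+1)\<bar>" by (auto simp: d_def)
      note s = side_lemma[OF this(1)] side_lemma[OF this(2)] side_lemma[OF this(3)] side_lemma[OF this(4)]
      have "(\<zeta> \<in> I_N N) = (\<xi> \<in> I_N N)" unfolding I_N_def using s by auto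
      then show ?thesis using d by (simp add: B0_def indicator_def)
    next
      case False
      have "cmod (B0 N R \<zeta> - B0 N R \<xi>) \<le> \<bar>R\<bar>" by (simp add: B0_def indicator_def)
      also have "\<bar>R\<bar> \<le> \<bar>R\<bar> / d * \<bar>\<zeta> - \<xi>\<bar>"
      proof -
        have "d \<le> \<bar>\<zeta> - \<xi>\<bar>" using False by simp
        then have "\<bar>R\<bar> * d \<le> \<bar>R\<bar> * \<bar>\<zeta> - \<xi>\<bar>" by (rule mult_left_mono) simp
        then show ?thesis using d by (simp add: field_simps mult.commute)
      qed
      finally show ?thesis .
    qed
  qed
qed

lemma fourier_phi0: "\<xi> \<notin> EN N \<Longrightarrow> fourier (phi0 N R) \<xi> = B0 N R \<xi>"
  using B0_lip_at[of \<xi> N R] fourier_IF[OF nice_B0] unfolding phi0_IF by blast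

definition A :: "real \<Rightarrow> real \<Rightarrow> real \<Rightarrow> real \<Rightarrow> complex" where
  "A N R \<tau> \<xi> = cis (\<tau> * dispersion \<xi>) * B0 N R \<xi>"

lemma A_measurable[measurable (raw)]:
  assumes f[measurable]: "f \<in> borel_measurable M" and g[measurable]: "g \<in> borel_measurable M"
  shows "(\<lambda>w. A N R (f w) (g w)) \<in> borel_measurable M"
proof -
  have [measurable]: "(\<lambda>w. dispersion (g w)) \<in> borel_measurable M"
    using measurable_compose[OF g dispersion_measurable] .
  have [measurable]: "(\<lambda>w. B0 N R (g w)) \<in> borel_measurable M"
    using measurable_compose[OF g B0_measurable] .
  show ?thesis unfolding A_def by measurable
qed

lemma U_phi0: "U \<tau> (phi0 N R) = IF (A N R \<tau>)"
  unfolding U_def A_def[abs_def]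
  by (rule fmult_IF[where E="EN N" and D=1, OF nice_B0]) (auto simp: EN_def fourier_phi0)

definition conv :: "(real \<Rightarrow> complex) \<Rightarrow> (real \<Rightarrow> complex) \<Rightarrow> real \<Rightarrow> complex" where
  "conv f g \<zeta> = (LINT a|lborel. f a * g (\<zeta> - a))"

lemma nice_conv:
  assumes "nice A1" "nice A2"
  shows "nice (conv A1 A2)"
proof -
  obtain C1 M1 where A1m[measurable]: "A1 \<in> borel_measurable borel" and A1b: "\<And>\<zeta>. cmod (A1 \<zeta>) \<le> C1"
    and A1s: "\<And>\<zeta>. \<bar>\<zeta>\<bar> > M1 \<Longrightarrow> A1 \<zeta> = 0" and C10: "0 \<le> C1" and M10: "0 \<le> M1" using niceE[OF assms(1)] by metis
  obtain C2 M2 where A2m[measurable]: "A2 \<in> borel_measurable borel" and A2b: "\<And>\<zeta>. cmod (A2 \<zeta>) \<le> C2"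
    and A2s: "\<And>\<zeta>. \<bar>\<zeta>\<bar> > M2 \<Longrightarrow> A2 \<zeta> = 0" and C20: "0 \<le> C2" and M20: "0 \<le> M2" using niceE[OF assms(2)] by metis
  show ?thesis
  proof (rule niceI[where C="C1 * C2 * (2 * M1)" and M="M1 + M2"])
    show "conv A1 A2 \<in> borel_measurable borel" unfolding conv_def[abs_def] by measurable
    show "cmod (conv A1 A2 \<zeta>) \<le> C1 * C2 * (2 * M1)" for \<zeta>
    proof -
      have "cmod (conv A1 A2 \<zeta>) \<le> (LBINT a. cmod (A1 a * A2 (\<zeta> - a)))"
        unfolding conv_def by (rule integral_norm_bound)
      also have "\<dots> \<le> (LBINT a. C1 * C2 * indicator {-M1..M1} a)"
      proof (rule integral_mono)
        show "integrable lborel (\<lambda>a. cmod (A1 a * A2 (\<zeta> - a)))"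
        proof (rule bcs_integrable[where C="C1*C2" and M=M1])
          show "\<bar>cmod (A1 a * A2 (\<zeta> - a))\<bar> \<le> C1 * C2" for a
            unfolding norm_mult by (simp, rule mult_mono) (use A1b A2b C20 C10 in auto)
        qed (use A1s in auto)
        show "integrable lborel (\<lambda>a. C1 * C2 * indicator {-M1..M1} a)" by (rule integrable_Icc_ind)
        show "cmod (A1 a * A2 (\<zeta> - a)) \<le> C1 * C2 * indicator {-M1..M1} a" for a
        proof (cases "\<bar>a\<bar> > M1")
          case False then show ?thesis
            unfolding norm_mult by (auto simp: indicator_def intro!: mult_mono A1b A2b C20 C10)
        qed (use A1s C10 C20 in auto)
      qed
      also have "\<dots> = C1 * C2 * (2 * M1)" using M10 by (simp add: emeasure_lborel_Icc_eq)
      finally show ?thesis .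
    qed
    show "conv A1 A2 \<zeta> = 0" if "\<bar>\<zeta>\<bar> > M1 + M2" for \<zeta>
    proof -
      have "A1 a * A2 (\<zeta> - a) = 0" for a
      proof (cases "\<bar>a\<bar> > M1")
        case False then have "\<bar>\<zeta> - a\<bar> > M2" using that by arith
        then show ?thesis using A2s by simp
      qed (use A1s in simp)
      then have "(\<lambda>a. A1 a * A2 (\<zeta> - a)) = (\<lambda>a. 0)" by (intro ext) simp
      then show ?thesis unfolding conv_def by simp
    qed
  qed
qed

lemma IF_mult:
  assumes "nice A1" "nice A2"
  shows "IF A1 y * IF A2 y = IF (\<lambda>\<zeta>. conv A1 A2 \<zeta> / (2*pi)) y"
proof -
  obtain C1 M1 where A1m[measurable]: "A1 \<in> borel_measurable borel" and A1b: "\<And>\<zeta>. cmod (A1 \<zeta>) \<le> C1"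
    and A1s: "\<And>\<zeta>. \<bar>\<zeta>\<bar> > M1 \<Longrightarrow> A1 \<zeta> = 0" and C10: "0 \<le> C1" and M10: "0 \<le> M1" using niceE[OF assms(1)] by metis
  obtain C2 M2 where A2m[measurable]: "A2 \<in> borel_measurable borel" and A2b: "\<And>\<zeta>. cmod (A2 \<zeta>) \<le> C2"
    and A2s: "\<And>\<zeta>. \<bar>\<zeta>\<bar> > M2 \<Longrightarrow> A2 \<zeta> = 0" and C20: "0 \<le> C2" and M20: "0 \<le> M2" using niceE[OF assms(2)] by metis
  define F where "F a \<zeta> = A1 a * A2 (\<zeta> - a) * cis (y * \<zeta>)" for a \<zeta>
  have intF: "integrable (lborel \<Otimes>\<^sub>M lborel) (\<lambda>(a,\<zeta>). F a \<zeta>)"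
  proof (rule Bochner_Integration.integrable_bound[where f="\<lambda>p. C1 * C2 * indicator ({-M1..M1} \<times> {-(M1+M2)..M1+M2}) p"])
    show "integrable (lborel \<Otimes>\<^sub>M lborel) (\<lambda>p. C1 * C2 * indicator ({-M1..M1} \<times> {-(M1+M2)..M1+M2}) p)"
      by (intro integrable_mult_right integrable_real_indicator)
         (auto simp: lborel.emeasure_pair_measure_Times emeasure_lborel_Icc_eq ennreal_mult_less_top)
    show "(\<lambda>(a,\<zeta>). F a \<zeta>) \<in> borel_measurable (lborel \<Otimes>\<^sub>M lborel)" unfolding F_def by measurable
    show "AE p in lborel \<Otimes>\<^sub>M lborel. norm ((\<lambda>(a,\<zeta>). F a \<zeta>) p) \<le> norm (C1 * C2 * indicator ({-M1..M1} \<times> {-(M1+M2)..M1+M2}) p)"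
    proof (rule AE_I2, clarify)
      fix a \<zeta> :: real
      show "norm (F a \<zeta>) \<le> norm (C1 * C2 * indicator ({-M1..M1} \<times> {-(M1+M2)..M1+M2}) (a, \<zeta>))"
      proof (cases "\<bar>a\<bar> \<le> M1 \<and> \<bar>\<zeta> - a\<bar> \<le> M2")
        case True
        then have "(a, \<zeta>) \<in> {-M1..M1} \<times> {-(M1+M2)..M1+M2}" by auto
        then show ?thesis using True C10 C20 by (auto simp: F_def norm_mult intro!: mult_mono A1b A2b)
      next
        case False then have "F a \<zeta> = 0" using A1s A2s by (auto simp: F_def)
        then show ?thesis by simp
      qed
    qed
  qed
  have "(LINT a|lborel. A1 a * cis (y * a)) * (LINT b|lborel. A2 b * cis (y * b)) =
        (LINT a|lborel. LINT \<zeta>|lborel. F a \<zeta>)"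
  proof -
    have "(LINT a|lborel. A1 a * cis (y * a)) * (LINT b|lborel. A2 b * cis (y * b)) =
          (LINT a|lborel. A1 a * cis (y * a) * (LINT b|lborel. A2 b * cis (y * b)))"
      by simp
    also have "\<dots> = (LINT a|lborel. LINT \<zeta>|lborel. F a \<zeta>)"
    proof (rule Bochner_Integration.integral_cong[OF refl])
      fix a
      have "(LINT b|lborel. A2 b * cis (y * b)) = (LINT \<zeta>|lborel. A2 (-a + \<zeta>) * cis (y * (-a + \<zeta>)))"
        using lborel_integral_real_affine[of 1 "\<lambda>b. A2 b * cis (y * b)" "-a"] by simp
      then have "A1 a * cis (y * a) * (LINT b|lborel. A2 b * cis (y * b)) =
          (LINT \<zeta>|lborel. A1 a * cis (y * a) * (A2 (-a + \<zeta>) * cis (y * (-a + \<zeta>))))"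
        by simp
      also have "\<dots> = (LINT \<zeta>|lborel. F a \<zeta>)"
      proof (rule Bochner_Integration.integral_cong[OF refl])
        fix \<zeta>
        have "cis (y * a) * cis (y * (-a + \<zeta>)) = cis (y * \<zeta>)" by (simp add: cis_mult algebra_simps)
        then show "A1 a * cis (y * a) * (A2 (-a + \<zeta>) * cis (y * (-a + \<zeta>))) = F a \<zeta>"
          unfolding F_def by (simp add: algebra_simps)
      qed
      finally show "A1 a * cis (y * a) * (LINT b|lborel. A2 b * cis (y * b)) = (LINT \<zeta>|lborel. F a \<zeta>)" .
    qed
    finally show ?thesis .
  qed
  also have "\<dots> = (LINT \<zeta>|lborel. LINT a|lborel. F a \<zeta>)"
    using lborel_pair.Fubini_integral[OF intF] by simp
  also have "\<dots> = (LINT \<zeta>|lborel. conv A1 A2 \<zeta> * cis (y * \<zeta>))"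
    unfolding F_def conv_def by simp
  finally have eq: "(LINT a|lborel. A1 a * cis (y * a)) * (LINT b|lborel. A2 b * cis (y * b)) =
     (LINT \<zeta>|lborel. conv A1 A2 \<zeta> * cis (y * \<zeta>))" .
  have "IF (\<lambda>\<zeta>. conv A1 A2 \<zeta> / (2*pi)) y = (LINT \<zeta>|lborel. conv A1 A2 \<zeta> * cis (y * \<zeta>)) / (2*pi) / (2*pi)"
    unfolding IF_def by simp
  then show ?thesis unfolding IF_def eq[symmetric] by simp
qed

definition lip :: "(real \<Rightarrow> complex) \<Rightarrow> real \<Rightarrow> bool" where
  "lip B K \<longleftrightarrow> (\<forall>\<zeta> \<zeta>'. cmod (B \<zeta> - B \<zeta>') \<le> K * \<bar>\<zeta> - \<zeta>'\<bar>)"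

lemma nice_shift: assumes "nice P" shows "nice (\<lambda>a. P (\<zeta> - a))"
proof -
  obtain C M where Pm[measurable]: "P \<in> borel_measurable borel" and Pb: "\<And>\<zeta>. cmod (P \<zeta>) \<le> C"
    and Ps: "\<And>\<zeta>. \<bar>\<zeta>\<bar> > M \<Longrightarrow> P \<zeta> = 0" using niceE[OF assms] by metis
  show ?thesis
  proof (rule niceI[where C=C and M="M + \<bar>\<zeta>\<bar>"])
    show "P (\<zeta> - a) = 0" if "\<bar>a\<bar> > M + \<bar>\<zeta>\<bar>" for a using that Ps[of "\<zeta> - a"] by arith
  qed (use Pb in auto)
qed

lemma nice_diff: "nice P \<Longrightarrow> nice Q \<Longrightarrow> nice (\<lambda>x. P x - Q x)"
proof -
  assume "nice P" "nice Q"
  then obtain C1 M1 C2 M2 where Pm[measurable]: "P \<in> borel_measurable borel" and Pb: "\<And>\<zeta>. cmod (P \<zeta>) \<le> C1"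
    and Ps: "\<And>\<zeta>. \<bar>\<zeta>\<bar> > M1 \<Longrightarrow> P \<zeta> = 0" and Qm[measurable]: "Q \<in> borel_measurable borel" and Qb: "\<And>\<zeta>. cmod (Q \<zeta>) \<le> C2"
    and Qs: "\<And>\<zeta>. \<bar>\<zeta>\<bar> > M2 \<Longrightarrow> Q \<zeta> = 0" and "0 \<le> M1" "0 \<le> M2" by (metis niceE)
  show ?thesis
  proof (rule niceI[where C="C1 + C2" and M="M1 + M2"])
    show "cmod (P \<zeta> - Q \<zeta>) \<le> C1 + C2" for \<zeta> using norm_triangle_ineq4[of "P \<zeta>" "Q \<zeta>"] Pb[of \<zeta>] Qb[of \<zeta>] by linarith
    show "P \<zeta> - Q \<zeta> = 0" if "\<bar>\<zeta>\<bar> > M1 + M2" for \<zeta> using that Ps[of \<zeta>] Qs[of \<zeta>] \<open>0 \<le> M1\<close> \<open>0 \<le> M2\<close> by auto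
  qed simp
qed

lemma nice_norm_integrable: "nice P \<Longrightarrow> integrable lborel (\<lambda>x. cmod (P x))"
  using nice_integrable integrable_norm by blast

lemma conv_lip:
  assumes "nice A1" "nice A2" "\<And>\<zeta>. cmod (A1 \<zeta>) \<le> C1"
    and sh: "\<And>\<zeta> \<zeta>'. (LBINT a. cmod (A2 (\<zeta> - a) - A2 (\<zeta>' - a))) \<le> K * \<bar>\<zeta> - \<zeta>'\<bar>"
  shows "lip (conv A1 A2) (C1 * K)"
  unfolding lip_def
proof (intro allI)
  fix \<zeta> \<zeta>' :: real
  have C10: "0 \<le> C1" using assms(3)[of 0] norm_ge_zero order_trans by blast
  have n1: "nice (\<lambda>a. A1 a * A2 (\<zeta> - a))" using nice_mult[OF nice_shift[OF assms(2)], of A1 C1] assms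
    by (auto elim: niceE simp: mult.commute)
  have n2: "nice (\<lambda>a. A1 a * A2 (\<zeta>' - a))" using nice_mult[OF nice_shift[OF assms(2)], of A1 C1] assms
    by (auto elim: niceE simp: mult.commute)
  have nd: "nice (\<lambda>a. A2 (\<zeta> - a) - A2 (\<zeta>' - a))" by (intro nice_diff nice_shift assms(2))
  have "conv A1 A2 \<zeta> - conv A1 A2 \<zeta>' = (LINT a|lborel. A1 a * (A2 (\<zeta> - a) - A2 (\<zeta>' - a)))"
    unfolding conv_def using nice_integrable[OF n1] nice_integrable[OF n2]
    by (simp add: right_diff_distrib)
  also have "cmod \<dots> \<le> (LBINT a. cmod (A1 a * (A2 (\<zeta> - a) - A2 (\<zeta>' - a))))"
    by (rule integral_norm_bound)
  also have "\<dots> \<le> (LBINT a. C1 * cmod (A2 (\<zeta> - a) - A2 (\<zeta>' - a)))"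
  proof (rule integral_mono)
    show "integrable lborel (\<lambda>a. cmod (A1 a * (A2 (\<zeta> - a) - A2 (\<zeta>' - a))))"
      using nice_norm_integrable[OF nice_mult[OF nd, of A1 C1]] assms by (auto elim: niceE simp: mult.commute)
    show "integrable lborel (\<lambda>a. C1 * cmod (A2 (\<zeta> - a) - A2 (\<zeta>' - a)))"
      using nice_norm_integrable[OF nd] by simp
    show "cmod (A1 a * (A2 (\<zeta> - a) - A2 (\<zeta>' - a))) \<le> C1 * cmod (A2 (\<zeta> - a) - A2 (\<zeta>' - a))" for a
      unfolding norm_mult by (rule mult_right_mono) (use assms(3) in auto)
  qed
  also have "\<dots> = C1 * (LBINT a. cmod (A2 (\<zeta> - a) - A2 (\<zeta>' - a)))" by simp
  also have "\<dots> \<le> C1 * (K * \<bar>\<zeta> - \<zeta>'\<bar>)" by (rule mult_left_mono[OF sh C10])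
  finally show "cmod (conv A1 A2 \<zeta> - conv A1 A2 \<zeta>') \<le> C1 * K * \<bar>\<zeta> - \<zeta>'\<bar>" by simp
qed

lemma A_bound: "cmod (A N R \<tau> \<xi>) \<le> \<bar>R\<bar>"
  by (simp add: A_def B0_def norm_mult indicator_def)

lemma ind_interval_shift:
  fixes p q \<zeta> \<zeta>' a :: real
  shows "\<bar>indicator {p..q} (\<zeta> - a) - indicator {p..q} (\<zeta>' - a)\<bar> \<le>
     (indicator {\<zeta>-q-\<bar>\<zeta>-\<zeta>'\<bar>..\<zeta>-q+\<bar>\<zeta>-\<zeta>'\<bar>} a + indicator {\<zeta>-p-\<bar>\<zeta>-\<zeta>'\<bar>..\<zeta>-p+\<bar>\<zeta>-\<zeta>'\<bar>} a :: real)"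
proof (cases "\<zeta> \<le> \<zeta>'")
  case True then show ?thesis by (auto simp: indicator_def)
next
  case False then show ?thesis by (auto simp: indicator_def)
qed

lemma ind_union_diff:
  "\<bar>indicator (X \<union> Y) u - indicator (X \<union> Y) v\<bar> \<le>
   \<bar>indicator X u - indicator X v\<bar> + (\<bar>indicator Y u - indicator Y v\<bar> :: real)"
  by (auto simp: indicator_def)

lemma A_pointwise:
  "cmod (A N R \<tau> u - A N R \<tau> v) \<le> \<bar>R\<bar> * \<bar>indicator (I_N N) u - indicator (I_N N) v\<bar> + \<bar>R\<bar> * \<bar>\<tau>\<bar> * \<bar>u - v\<bar> * indicator (I_N N) v"
proof -
  let ?c = "\<lambda>x. cis (\<tau> * dispersion x)"
  let ?i = "\<lambda>x. indicator (I_N N) x :: real"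
  have "A N R \<tau> u - A N R \<tau> v = ?c u * complex_of_real (R * (?i u - ?i v)) + (?c u - ?c v) * complex_of_real (R * ?i v)"
    by (simp add: A_def B0_def algebra_simps)
  also have "cmod \<dots> \<le> cmod (?c u * complex_of_real (R * (?i u - ?i v))) + cmod ((?c u - ?c v) * complex_of_real (R * ?i v))"
    by (rule norm_triangle_ineq)
  also have "cmod (?c u * complex_of_real (R * (?i u - ?i v))) = \<bar>R\<bar> * \<bar>?i u - ?i v\<bar>"
    by (simp only: norm_mult norm_of_real abs_mult) simp
  also have "cmod ((?c u - ?c v) * complex_of_real (R * ?i v)) \<le> \<bar>R\<bar> * \<bar>\<tau>\<bar> * \<bar>u - v\<bar> * ?i v"
  proof -
    have "cmod (?c u - ?c v) \<le> \<bar>\<tau> * dispersion u - \<tau> * dispersion v\<bar>" by (rule cis_diff_le)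
    also have "\<dots> = \<bar>\<tau>\<bar> * \<bar>dispersion u - dispersion v\<bar>" by (simp add: abs_mult right_diff_distrib[symmetric])
    also have "\<dots> \<le> \<bar>\<tau>\<bar> * \<bar>u - v\<bar>" by (rule mult_left_mono[OF dispersion_lip]) simp
    finally have "cmod (?c u - ?c v) * (\<bar>R\<bar> * ?i v) \<le> \<bar>\<tau>\<bar> * \<bar>u - v\<bar> * (\<bar>R\<bar> * ?i v)"
      by (rule mult_right_mono) simp
    then show ?thesis by (simp add: norm_mult abs_mult ac_simps)
  qed
  finally show ?thesis by simp
qed

lemma A_shift:
  "(LBINT a. cmod (A N R \<tau> (\<zeta> - a) - A N R \<tau> (\<zeta>' - a))) \<le> \<bar>R\<bar> * (8 + 4 * \<bar>\<tau>\<bar>) * \<bar>\<zeta> - \<zeta>'\<bar>"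
proof -
  define s where "s = \<bar>\<zeta> - \<zeta>'\<bar>"
  have s0: "0 \<le> s" by (simp add: s_def)
  define g where "g a = \<bar>R\<bar> * (indicator {\<zeta>-(N+1)-s..\<zeta>-(N+1)+s} a + indicator {\<zeta>-(N-1)-s..\<zeta>-(N-1)+s} a
     + indicator {\<zeta>-(-N+1)-s..\<zeta>-(-N+1)+s} a + indicator {\<zeta>-(-N-1)-s..\<zeta>-(-N-1)+s} a)
     + \<bar>R\<bar> * \<bar>\<tau>\<bar> * s * (indicator {\<zeta>'+N-1..\<zeta>'+N+1} a + indicator {\<zeta>'-N-1..\<zeta>'-N+1} a)" for a
  have gint: "integrable lborel g" unfolding g_def
    by (intro Bochner_Integration.integrable_add integrable_mult_right integrable_real_indicator) (auto simp: emeasure_lborel_Icc_eq)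
  have "(LBINT a. cmod (A N R \<tau> (\<zeta> - a) - A N R \<tau> (\<zeta>' - a))) \<le> (LBINT a. g a)"
  proof (rule integral_mono[OF _ gint])
    show "integrable lborel (\<lambda>a. cmod (A N R \<tau> (\<zeta> - a) - A N R \<tau> (\<zeta>' - a)))"
    proof (rule bcs_integrable[where C="2 * \<bar>R\<bar>" and M="\<bar>\<zeta>\<bar> + \<bar>\<zeta>'\<bar> + \<bar>N\<bar> + 1"])
      show "\<bar>cmod (A N R \<tau> (\<zeta> - a) - A N R \<tau> (\<zeta>' - a))\<bar> \<le> 2 * \<bar>R\<bar>" for a
        using norm_triangle_ineq4[of "A N R \<tau> (\<zeta> - a)" "A N R \<tau> (\<zeta>' - a)"]
          A_bound[of N R \<tau> "\<zeta> - a"] A_bound[of N R \<tau> "\<zeta>' - a"] by simp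
      show "cmod (A N R \<tau> (\<zeta> - a) - A N R \<tau> (\<zeta>' - a)) = 0" if "\<bar>a\<bar> > \<bar>\<zeta>\<bar> + \<bar>\<zeta>'\<bar> + \<bar>N\<bar> + 1" for a
      proof -
        have "\<zeta> - a \<notin> I_N N" "\<zeta>' - a \<notin> I_N N" using that by (auto simp: I_N_def)
        then show ?thesis by (simp add: A_def B0_def)
      qed
    qed measurable
    fix a
    have "cmod (A N R \<tau> (\<zeta> - a) - A N R \<tau> (\<zeta>' - a)) \<le>
        \<bar>R\<bar> * \<bar>indicator (I_N N) (\<zeta> - a) - indicator (I_N N) (\<zeta>' - a)\<bar> + \<bar>R\<bar> * \<bar>\<tau>\<bar> * \<bar>(\<zeta> - a) - (\<zeta>' - a)\<bar> * indicator (I_N N) (\<zeta>' - a)"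
      by (rule A_pointwise)
    also have "\<dots> \<le> g a"
    proof -
      have i1: "\<bar>indicator (I_N N) (\<zeta> - a) - indicator (I_N N) (\<zeta>' - a)\<bar> \<le>
          (indicator {\<zeta>-(N+1)-s..\<zeta>-(N+1)+s} a + indicator {\<zeta>-(N-1)-s..\<zeta>-(N-1)+s} a
          + indicator {\<zeta>-(-N+1)-s..\<zeta>-(-N+1)+s} a + indicator {\<zeta>-(-N-1)-s..\<zeta>-(-N-1)+s} a :: real)"
        using ind_union_diff[of "{-N-1..-N+1}" "{N-1..N+1}" "\<zeta> - a" "\<zeta>' - a"]
          ind_interval_shift[of "-N-1" "-N+1" \<zeta> a \<zeta>'] ind_interval_shift[of "N-1" "N+1" \<zeta> a \<zeta>']
        unfolding I_N_def s_def by (simp add: algebra_simps)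
      have i2: "indicator (I_N N) (\<zeta>' - a) \<le> (indicator {\<zeta>'+N-1..\<zeta>'+N+1} a + indicator {\<zeta>'-N-1..\<zeta>'-N+1} a :: real)"
        by (auto simp: I_N_def indicator_def)
      have "\<bar>R\<bar> * \<bar>indicator (I_N N) (\<zeta> - a) - indicator (I_N N) (\<zeta>' - a)\<bar> \<le>
          \<bar>R\<bar> * (indicator {\<zeta>-(N+1)-s..\<zeta>-(N+1)+s} a + indicator {\<zeta>-(N-1)-s..\<zeta>-(N-1)+s} a
          + indicator {\<zeta>-(-N+1)-s..\<zeta>-(-N+1)+s} a + indicator {\<zeta>-(-N-1)-s..\<zeta>-(-N-1)+s} a)"
        by (rule mult_left_mono[OF i1]) simp
      moreover have "\<bar>R\<bar> * \<bar>\<tau>\<bar> * \<bar>(\<zeta> - a) - (\<zeta>' - a)\<bar> * indicator (I_N N) (\<zeta>' - a) \<le>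
          \<bar>R\<bar> * \<bar>\<tau>\<bar> * s * (indicator {\<zeta>'+N-1..\<zeta>'+N+1} a + indicator {\<zeta>'-N-1..\<zeta>'-N+1} a)"
      proof -
        have "\<bar>(\<zeta> - a) - (\<zeta>' - a)\<bar> = s" by (simp add: s_def)
        then show ?thesis using mult_left_mono[OF i2, of "\<bar>R\<bar> * \<bar>\<tau>\<bar> * s"] s0 by simp
      qed
      ultimately show ?thesis unfolding g_def by linarith
    qed
    finally show "cmod (A N R \<tau> (\<zeta> - a) - A N R \<tau> (\<zeta>' - a)) \<le> g a" .
  qed
  also have "(LBINT a. g a) = \<bar>R\<bar> * (8 * s) + \<bar>R\<bar> * \<bar>\<tau>\<bar> * s * 4"
    unfolding g_def using s0
    by (simp add: integrable_real_indicator emeasure_lborel_Icc_eq algebra_simps)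
  also have "\<dots> = \<bar>R\<bar> * (8 + 4 * \<bar>\<tau>\<bar>) * \<bar>\<zeta> - \<zeta>'\<bar>" by (simp add: s_def algebra_simps)
  finally show ?thesis .
qed

lemma nice_scale: "nice B \<Longrightarrow> nice (\<lambda>\<zeta>. B \<zeta> / c)"
proof -
  assume "nice B"
  then obtain C M where [measurable]: "B \<in> borel_measurable borel" and "\<And>\<zeta>. cmod (B \<zeta>) \<le> C" "\<And>\<zeta>. \<bar>\<zeta>\<bar> > M \<Longrightarrow> B \<zeta> = 0"
    by (metis niceE)
  then show ?thesis
    by (intro niceI[where C="C / cmod c" and M=M]) (auto simp: norm_divide divide_right_mono)
qed

lemma lip_scale: "lip B K \<Longrightarrow> lip (\<lambda>\<zeta>. B \<zeta> / complex_of_real c) (K / \<bar>c\<bar>)"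
  unfolding lip_def
proof (intro allI)
  fix \<zeta> \<zeta>' assume "\<forall>\<zeta> \<zeta>'. cmod (B \<zeta> - B \<zeta>') \<le> K * \<bar>\<zeta> - \<zeta>'\<bar>"
  then have "cmod (B \<zeta> - B \<zeta>') / \<bar>c\<bar> \<le> K * \<bar>\<zeta> - \<zeta>'\<bar> / \<bar>c\<bar>" by (simp add: divide_right_mono)
  then show "cmod (B \<zeta> / complex_of_real c - B \<zeta>' / complex_of_real c) \<le> K / \<bar>c\<bar> * \<bar>\<zeta> - \<zeta>'\<bar>"
    by (simp add: diff_divide_distrib[symmetric] norm_divide)
qed

lemma lip_mult:
  assumes "lip f Kf" "lip g Kg" "\<And>\<zeta>. cmod (f \<zeta>) \<le> a" "\<And>\<zeta>. cmod (g \<zeta>) \<le> b"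
  shows "lip (\<lambda>\<zeta>. f \<zeta> * g \<zeta>) (a * Kg + b * Kf)"
  unfolding lip_def
proof (intro allI)
  fix \<zeta> \<zeta>'
  have a0: "0 \<le> a" using assms(3)[of 0] norm_ge_zero order_trans by blast
  have b0: "0 \<le> b" using assms(4)[of 0] norm_ge_zero order_trans by blast
  have "f \<zeta> * g \<zeta> - f \<zeta>' * g \<zeta>' = f \<zeta> * (g \<zeta> - g \<zeta>') + (f \<zeta> - f \<zeta>') * g \<zeta>'" by (simp add: algebra_simps)
  then have "cmod (f \<zeta> * g \<zeta> - f \<zeta>' * g \<zeta>') \<le> cmod (f \<zeta>) * cmod (g \<zeta> - g \<zeta>') + cmod (f \<zeta> - f \<zeta>') * cmod (g \<zeta>')"
    by (metis norm_mult norm_triangle_ineq)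
  also have "\<dots> \<le> a * (Kg * \<bar>\<zeta> - \<zeta>'\<bar>) + (Kf * \<bar>\<zeta> - \<zeta>'\<bar>) * b"
  proof (rule add_mono)
    have kg: "cmod (g \<zeta> - g \<zeta>') \<le> Kg * \<bar>\<zeta> - \<zeta>'\<bar>" using assms(2) unfolding lip_def by blast
    show "cmod (f \<zeta>) * cmod (g \<zeta> - g \<zeta>') \<le> a * (Kg * \<bar>\<zeta> - \<zeta>'\<bar>)"
      by (intro mult_mono kg assms(3) a0) simp
    have k: "cmod (f \<zeta> - f \<zeta>') \<le> Kf * \<bar>\<zeta> - \<zeta>'\<bar>" using assms(1) unfolding lip_def by blast
    then have "0 \<le> Kf * \<bar>\<zeta> - \<zeta>'\<bar>" using norm_ge_zero order_trans by blast
    then show "cmod (f \<zeta> - f \<zeta>') * cmod (g \<zeta>') \<le> Kf * \<bar>\<zeta> - \<zeta>'\<bar> * b"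
      using k by (intro mult_mono) (use assms(4) in auto)
  qed
  finally show "cmod (f \<zeta> * g \<zeta> - f \<zeta>' * g \<zeta>') \<le> (a * Kg + b * Kf) * \<bar>\<zeta> - \<zeta>'\<bar>" by (simp add: algebra_simps)
qed

lemma lip_disp: "lip (\<lambda>\<zeta>. complex_of_real (dispersion \<zeta>)) 1"
  unfolding lip_def using dispersion_lip by (simp flip: of_real_diff)

lemma lip_cis_disp: "lip (\<lambda>\<zeta>. cis (s * dispersion \<zeta>)) \<bar>s\<bar>"
  unfolding lip_def
proof (intro allI)
  fix \<zeta> \<zeta>'
  have "cmod (cis (s * dispersion \<zeta>) - cis (s * dispersion \<zeta>')) \<le> \<bar>s * dispersion \<zeta> - s * dispersion \<zeta>'\<bar>" by (rule cis_diff_le)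
  also have "\<dots> = \<bar>s\<bar> * \<bar>dispersion \<zeta> - dispersion \<zeta>'\<bar>" by (simp add: abs_mult flip: right_diff_distrib)
  also have "\<dots> \<le> \<bar>s\<bar> * \<bar>\<zeta> - \<zeta>'\<bar>" by (rule mult_left_mono[OF dispersion_lip]) simp
  finally show "cmod (cis (s * dispersion \<zeta>) - cis (s * dispersion \<zeta>')) \<le> \<bar>s\<bar> * \<bar>\<zeta> - \<zeta>'\<bar>" .
qed

lemma conv_bound:
  assumes "nice A1" "nice A2" "\<And>\<zeta>. cmod (A1 \<zeta>) \<le> C1" "\<And>\<zeta>. cmod (A2 \<zeta>) \<le> C2"
    "\<And>\<zeta>. \<bar>\<zeta>\<bar> > M1 \<Longrightarrow> A1 \<zeta> = 0" "0 \<le> M1"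
  shows "cmod (conv A1 A2 \<zeta>) \<le> C1 * C2 * (2 * M1)"
proof -
  have C10: "0 \<le> C1" using assms(3)[of 0] norm_ge_zero order_trans by blast
  have C20: "0 \<le> C2" using assms(4)[of 0] norm_ge_zero order_trans by blast
  have n: "nice (\<lambda>a. A1 a * A2 (\<zeta> - a))" using nice_mult[OF nice_shift[OF assms(2)], of A1 C1] assms
    by (auto elim: niceE simp: mult.commute)
  have "cmod (conv A1 A2 \<zeta>) \<le> (LBINT a. cmod (A1 a * A2 (\<zeta> - a)))"
    unfolding conv_def by (rule integral_norm_bound)
  also have "\<dots> \<le> (LBINT a. C1 * C2 * indicator {-M1..M1} a)"
  proof (rule integral_mono[OF nice_norm_integrable[OF n] integrable_Icc_ind])
    show "cmod (A1 a * A2 (\<zeta> - a)) \<le> C1 * C2 * indicator {-M1..M1} a" for a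
    proof (cases "\<bar>a\<bar> > M1")
      case False then show ?thesis
        unfolding norm_mult by (auto simp: indicator_def intro!: mult_mono assms(3,4) C10 C20)
    qed (use assms(5) C10 C20 in auto)
  qed
  also have "\<dots> = C1 * C2 * (2 * M1)" using assms(6) by (simp add: emeasure_lborel_Icc_eq)
  finally show ?thesis .
qed

definition D :: "real \<Rightarrow> real \<Rightarrow> real \<Rightarrow> real \<Rightarrow> complex" where
  "D N R \<tau> \<zeta> = conv (A N R \<tau>) (A N R \<tau>) \<zeta> / (2 * pi)"

lemma nice_A: "nice (A N R \<tau>)"
proof -
  have "(\<lambda>\<xi>. cis (\<tau> * dispersion \<xi>)) \<in> borel_measurable borel" by measurable
  then show ?thesis unfolding A_def[abs_def] by (rule nice_mult[OF nice_B0, where D=1]) simp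
qed

lemma A_support: "\<bar>\<zeta>\<bar> > \<bar>N\<bar> + 1 \<Longrightarrow> A N R \<tau> \<zeta> = 0"
proof -
  assume "\<bar>\<zeta>\<bar> > \<bar>N\<bar> + 1"
  then have "\<zeta> \<notin> I_N N" by (auto simp: I_N_def)
  then show ?thesis by (simp add: A_def B0_def)
qed

lemma nice_D: "nice (D N R \<tau>)"
  unfolding D_def[abs_def] by (intro nice_scale nice_conv nice_A)

definition CD :: "real \<Rightarrow> real \<Rightarrow> real" where "CD N R = R\<^sup>2 * (2 * (\<bar>N\<bar> + 1)) / (2 * pi)"

lemma D_bound: "cmod (D N R \<tau> \<zeta>) \<le> CD N R"
proof -
  have "cmod (conv (A N R \<tau>) (A N R \<tau>) \<zeta>) \<le> \<bar>R\<bar> * \<bar>R\<bar> * (2 * (\<bar>N\<bar> + 1))"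
    by (rule conv_bound[of "A N R \<tau>" "A N R \<tau>" "\<bar>R\<bar>" "\<bar>R\<bar>" "\<bar>N\<bar>+1"]) (auto intro: nice_A A_bound A_support)
  then show ?thesis unfolding D_def CD_def by (simp add: norm_divide divide_right_mono power2_eq_square abs_mult_self_eq)
qed

lemma lip_D: "lip (D N R \<tau>) (\<bar>R\<bar> * (\<bar>R\<bar> * (8 + 4 * \<bar>\<tau>\<bar>)) / (2 * pi))"
proof -
  have "lip (conv (A N R \<tau>) (A N R \<tau>)) (\<bar>R\<bar> * (\<bar>R\<bar> * (8 + 4 * \<bar>\<tau>\<bar>)))"
    by (rule conv_lip[OF nice_A nice_A A_bound A_shift])
  from lip_scale[OF this, of "2*pi"] show ?thesis unfolding D_def[abs_def] by simp
qed

lemma fourier_IF_lip: "nice B \<Longrightarrow> lip B K \<Longrightarrow> fourier (IF B) \<xi> = B \<xi>"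
  by (rule fourier_IF[where K=K]) (auto simp: lip_def)

lemma square_U: "(\<lambda>y. U \<tau> (phi0 N R) y * U \<tau> (phi0 N R) y) = IF (D N R \<tau>)"
  unfolding U_phi0 D_def[abs_def] by (intro ext IF_mult nice_A)

lemma disp_cbound: "cmod (complex_of_real (dispersion \<zeta>)) \<le> 1/2"
  using dispersion_bound by simp

lemma phiD_sq: "phiD (\<lambda>y. U \<tau> (phi0 N R) y * U \<tau> (phi0 N R) y) = IF (\<lambda>\<zeta>. complex_of_real (dispersion \<zeta>) * D N R \<tau> \<zeta>)"
  unfolding square_U phiD_def
proof (rule fmult_IF[where E="{}" and D="1/2", OF nice_D])
  show "\<And>\<xi>. \<xi> \<notin> {} \<Longrightarrow> fourier (IF (D N R \<tau>)) \<xi> = D N R \<tau> \<xi>" by (rule fourier_IF_lip[OF nice_D lip_D])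
qed (use dispersion_bound in \<open>auto simp: field_simps\<close>)

definition KD :: "real \<Rightarrow> real \<Rightarrow> real" where "KD R T = \<bar>R\<bar> * (\<bar>R\<bar> * (8 + 4 * T)) / (2 * pi)"

lemma lip_mono: "lip B K \<Longrightarrow> K \<le> K' \<Longrightarrow> lip B K'"
  unfolding lip_def by (meson abs_ge_zero mult_right_mono order_trans)

lemma lip_D': "\<bar>\<tau>\<bar> \<le> T \<Longrightarrow> lip (D N R \<tau>) (KD R T)"
  by (rule lip_mono[OF lip_D]) (auto simp: KD_def intro!: divide_right_mono mult_left_mono)

lemma nice_phiD: "nice (\<lambda>\<zeta>. complex_of_real (dispersion \<zeta>) * D N R \<tau> \<zeta>)"
  by (rule nice_mult[OF nice_D _ disp_cbound]) measurable

lemma lip_phiD: "\<bar>\<tau>\<bar> \<le> T \<Longrightarrow> lip (\<lambda>\<zeta>. complex_of_real (dispersion \<zeta>) * D N R \<tau> \<zeta>) (1/2 * KD R T + CD N R * 1)"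
  by (rule lip_mult[OF lip_disp lip_D' disp_cbound D_bound])

definition H :: "real \<Rightarrow> real \<Rightarrow> real \<Rightarrow> real \<Rightarrow> real \<Rightarrow> complex" where
  "H N R t \<tau> \<zeta> = cis ((t - \<tau>) * dispersion \<zeta>) * (complex_of_real (dispersion \<zeta>) * D N R \<tau> \<zeta>)"

lemma U_phiD: "U (t - \<tau>) (phiD (\<lambda>y. U \<tau> (phi0 N R) y * U \<tau> (phi0 N R) y)) = IF (H N R t \<tau>)"
  unfolding phiD_sq unfolding U_def H_def[abs_def]
proof (rule fmult_IF[where E="{}" and D=1, OF nice_phiD])
  show "\<And>\<xi>. \<xi> \<notin> {} \<Longrightarrow> fourier (IF (\<lambda>\<zeta>. complex_of_real (dispersion \<zeta>) * D N R \<tau> \<zeta>)) \<xi> = complex_of_real (dispersion \<xi>) * D N R \<tau> \<xi>"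
    by (rule fourier_IF_lip[OF nice_phiD lip_phiD[OF order_refl]])
qed auto

lemma H_measurable: "(\<lambda>p. H N R t (fst p) (snd p)) \<in> borel_measurable (lborel \<Otimes>\<^sub>M lborel)"
  unfolding H_def D_def conv_def by measurable

lemma IF_param:
  fixes a b :: real
  assumes meas: "(\<lambda>p. Hf (fst p) (snd p)) \<in> borel_measurable (lborel \<Otimes>\<^sub>M lborel)"
    and bnd: "\<And>\<tau> \<zeta>. cmod (Hf \<tau> \<zeta>) \<le> C" and sup: "\<And>\<tau> \<zeta>. \<bar>\<zeta>\<bar> > M \<Longrightarrow> Hf \<tau> \<zeta> = 0"
  shows "(LINT \<tau>:{a..b}|lborel. IF (Hf \<tau>) x) = IF (\<lambda>\<zeta>. LINT \<tau>:{a..b}|lborel. Hf \<tau> \<zeta>) x"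
proof -
  have C0: "0 \<le> C" using bnd[of 0 0] norm_ge_zero order_trans by blast
  define F where "F \<tau> \<zeta> = indicator {a..b} \<tau> *\<^sub>R (Hf \<tau> \<zeta> * cis (x * \<zeta>))" for \<tau> \<zeta>
  have intF: "integrable (lborel \<Otimes>\<^sub>M lborel) (\<lambda>(\<tau>,\<zeta>). F \<tau> \<zeta>)"
  proof (rule Bochner_Integration.integrable_bound[where f="\<lambda>p. C * indicator ({a..b} \<times> {-M..M}) p"])
    show "integrable (lborel \<Otimes>\<^sub>M lborel) (\<lambda>p. C * indicator ({a..b} \<times> {-M..M}) p)"
      by (intro integrable_mult_right integrable_real_indicator)
         (auto simp: lborel.emeasure_pair_measure_Times emeasure_lborel_Icc_eq ennreal_mult_less_top)
    have [measurable]: "(\<lambda>p. Hf (fst p) (snd p)) \<in> borel_measurable (lborel \<Otimes>\<^sub>M lborel)" by (rule meas)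
    show "(\<lambda>(\<tau>,\<zeta>). F \<tau> \<zeta>) \<in> borel_measurable (lborel \<Otimes>\<^sub>M lborel)"
      unfolding F_def case_prod_beta by measurable
    show "AE p in lborel \<Otimes>\<^sub>M lborel. norm ((\<lambda>(\<tau>,\<zeta>). F \<tau> \<zeta>) p) \<le> norm (C * indicator ({a..b} \<times> {-M..M}) p)"
    proof (rule AE_I2, clarify)
      fix \<tau> \<zeta> :: real
      show "norm (F \<tau> \<zeta>) \<le> norm (C * indicator ({a..b} \<times> {-M..M}) (\<tau>, \<zeta>))"
        using bnd[of \<tau> \<zeta>] sup[of \<zeta> \<tau>] C0 by (auto simp: F_def indicator_def norm_mult)
    qed
  qed
  have "(LINT \<tau>:{a..b}|lborel. IF (Hf \<tau>) x) = (LINT \<tau>|lborel. LINT \<zeta>|lborel. F \<tau> \<zeta>) / (2*pi)"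
    unfolding set_lebesgue_integral_def IF_def F_def by (simp add: scaleR_conv_of_real)
  also have "(LINT \<tau>|lborel. LINT \<zeta>|lborel. F \<tau> \<zeta>) = (LINT \<zeta>|lborel. LINT \<tau>|lborel. F \<tau> \<zeta>)"
    using lborel_pair.Fubini_integral[OF intF] by simp
  also have "\<dots> = (LINT \<zeta>|lborel. (LINT \<tau>:{a..b}|lborel. Hf \<tau> \<zeta>) * cis (x * \<zeta>))"
    unfolding set_lebesgue_integral_def F_def
  proof (rule Bochner_Integration.integral_cong[OF refl])
    fix \<zeta>
    have "(LINT \<tau>|lborel. indicator {a..b} \<tau> *\<^sub>R (Hf \<tau> \<zeta> * cis (x * \<zeta>))) =
          (LINT \<tau>|lborel. (indicator {a..b} \<tau> *\<^sub>R Hf \<tau> \<zeta>) * cis (x * \<zeta>))"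
      by (simp add: scaleR_conv_of_real mult.assoc)
    also have "\<dots> = (LINT \<tau>|lborel. indicator {a..b} \<tau> *\<^sub>R Hf \<tau> \<zeta>) * cis (x * \<zeta>)"
      by (rule integral_mult_left_zero)
    finally show "(LINT \<tau>|lborel. indicator {a..b} \<tau> *\<^sub>R (Hf \<tau> \<zeta> * cis (x * \<zeta>))) =
          (LINT \<tau>|lborel. indicator {a..b} \<tau> *\<^sub>R Hf \<tau> \<zeta>) * cis (x * \<zeta>)" .
  qed
  finally show ?thesis unfolding IF_def .
qed

lemma IF_cmult: "c * IF B x = IF (\<lambda>\<zeta>. c * B \<zeta>) x"
  unfolding IF_def by (simp add: mult.assoc)

lemma conv_support:
  assumes "\<And>\<zeta>. \<bar>\<zeta>\<bar> > M1 \<Longrightarrow> A1 \<zeta> = 0" "\<And>\<zeta>. \<bar>\<zeta>\<bar> > M2 \<Longrightarrow> A2 \<zeta> = 0" "\<bar>\<zeta>\<bar> > M1 + M2"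
  shows "conv A1 A2 \<zeta> = 0"
proof -
  have "A1 a * A2 (\<zeta> - a) = 0" for a
  proof (cases "\<bar>a\<bar> > M1")
    case False then have "\<bar>\<zeta> - a\<bar> > M2" using assms(3) by arith
    then show ?thesis using assms(2) by simp
  qed (use assms(1) in simp)
  then have "(\<lambda>a. A1 a * A2 (\<zeta> - a)) = (\<lambda>a. 0)" by (intro ext) simp
  then show ?thesis unfolding conv_def by simp
qed

lemma D_support: "\<bar>\<zeta>\<bar> > 2 * (\<bar>N\<bar> + 1) \<Longrightarrow> D N R \<tau> \<zeta> = 0"
proof -
  assume z: "\<bar>\<zeta>\<bar> > 2 * (\<bar>N\<bar> + 1)"
  have "conv (A N R \<tau>) (A N R \<tau>) \<zeta> = 0"
    by (rule conv_support[of "\<bar>N\<bar>+1" "A N R \<tau>" "\<bar>N\<bar>+1" "A N R \<tau>"]) (use z in \<open>auto intro: A_support\<close>)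
  then show ?thesis by (simp add: D_def)
qed

lemma H_bound: "cmod (H N R t \<tau> \<zeta>) \<le> 1/2 * CD N R"
proof -
  have "cmod (complex_of_real (dispersion \<zeta>) * D N R \<tau> \<zeta>) \<le> 1/2 * CD N R"
    unfolding norm_mult by (rule mult_mono[OF disp_cbound D_bound]) auto
  then show ?thesis by (simp add: H_def norm_mult)
qed

lemma H_support: "\<bar>\<zeta>\<bar> > 2 * (\<bar>N\<bar> + 1) \<Longrightarrow> H N R t \<tau> \<zeta> = 0"
  by (simp add: H_def D_support)

lemma duhamel_eq:
  "duhamel (\<lambda>\<tau>. U \<tau> (phi0 N R)) (\<lambda>\<tau>. U \<tau> (phi0 N R)) t x = IF (\<lambda>\<zeta>. LINT \<tau>:{0..t}|lborel. H N R t \<tau> \<zeta>) x"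
  unfolding duhamel_def U_phiD
  by (rule IF_param[OF H_measurable H_bound H_support])

definition G :: "real \<Rightarrow> real \<Rightarrow> real \<Rightarrow> real \<Rightarrow> complex" where
  "G N R T \<zeta> = - (\<i> / 2) * (LINT \<tau>:{0..T}|lborel. H N R T \<tau> \<zeta>)"

lemma U2_eq: "U2 (phi0 N R) T = IF (G N R T)"
  unfolding U2_def duhamel_eq G_def[abs_def] by (intro ext IF_cmult)

lemma set_int_bound:
  fixes f :: "real \<Rightarrow> complex" and a b :: real
  assumes fm: "f \<in> borel_measurable borel" and fb: "\<And>\<tau>. \<tau> \<in> {a..b} \<Longrightarrow> cmod (f \<tau>) \<le> c" and ab: "a \<le> b"
  shows "cmod (LINT \<tau>:{a..b}|lborel. f \<tau>) \<le> c * (b - a)"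
proof -
  have c0: "0 \<le> c"
  proof -
    have "cmod (f a) \<le> c" using fb ab by auto
    then show ?thesis by (meson norm_ge_zero order_trans)
  qed
  have "cmod (LINT \<tau>:{a..b}|lborel. f \<tau>) \<le> (LBINT \<tau>. cmod (indicator {a..b} \<tau> *\<^sub>R f \<tau>))"
    unfolding set_lebesgue_integral_def by (rule integral_norm_bound)
  also have "\<dots> \<le> (LBINT \<tau>. c * indicator {a..b} \<tau>)"
  proof (rule integral_mono[OF _ integrable_Icc_ind])
    show "integrable lborel (\<lambda>\<tau>. cmod (indicator {a..b} \<tau> *\<^sub>R f \<tau>))"
    proof (rule bcs_integrable[where C=c and M="\<bar>a\<bar> + \<bar>b\<bar>"])
      show "(\<lambda>\<tau>. cmod (indicator {a..b} \<tau> *\<^sub>R f \<tau>)) \<in> borel_measurable borel" using fm by measurable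
      show "\<bar>cmod (indicator {a..b} \<tau> *\<^sub>R f \<tau>)\<bar> \<le> c" for \<tau> using fb[of \<tau>] c0 by (auto simp: indicator_def)
      show "cmod (indicator {a..b} \<tau> *\<^sub>R f \<tau>) = 0" if "\<bar>\<tau>\<bar> > \<bar>a\<bar> + \<bar>b\<bar>" for \<tau>
        using that by (auto simp: indicator_def)
    qed
    show "cmod (indicator {a..b} \<tau> *\<^sub>R f \<tau>) \<le> c * indicator {a..b} \<tau>" for \<tau>
      using fb[of \<tau>] by (auto simp: indicator_def)
  qed
  also have "\<dots> = c * (b - a)" using ab by simp
  finally show ?thesis .
qed

lemma H_measurable2[measurable]: "(\<lambda>\<tau>. H N R t \<tau> \<zeta>) \<in> borel_measurable borel"
  unfolding H_def D_def conv_def by measurable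

lemma G_measurable[measurable]: "G N R T \<in> borel_measurable borel"
  unfolding G_def[abs_def] H_def D_def conv_def set_lebesgue_integral_def by measurable

lemma G_bound: "0 \<le> T \<Longrightarrow> cmod (G N R T \<zeta>) \<le> 1/2 * (1/2 * CD N R * T)"
proof -
  assume T: "0 \<le> T"
  have "cmod (LINT \<tau>:{0..T}|lborel. H N R T \<tau> \<zeta>) \<le> 1/2 * CD N R * (T - 0)"
    by (rule set_int_bound[OF H_measurable2 H_bound T])
  then show ?thesis by (simp add: G_def norm_mult)
qed

lemma G_support: "\<bar>\<zeta>\<bar> > 2 * (\<bar>N\<bar> + 1) \<Longrightarrow> G N R T \<zeta> = 0"
  by (simp add: G_def H_support)

lemma nice_G: "0 \<le> T \<Longrightarrow> nice (G N R T)"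
  by (rule niceI[OF G_measurable G_bound G_support])

definition KH :: "real \<Rightarrow> real \<Rightarrow> real \<Rightarrow> real" where
  "KH N R T = 1 * (1/2 * KD R T + CD N R * 1) + 1/2 * CD N R * T"

lemma lip_H: "\<tau> \<in> {0..T} \<Longrightarrow> lip (H N R T \<tau>) (KH N R T)"
proof -
  assume t: "\<tau> \<in> {0..T}"
  have c1: "cmod (cis ((T - \<tau>) * dispersion \<zeta>)) \<le> 1" for \<zeta> by simp
  have b2: "cmod (complex_of_real (dispersion \<zeta>) * D N R \<tau> \<zeta>) \<le> 1/2 * CD N R" for \<zeta>
    unfolding norm_mult by (rule mult_mono[OF disp_cbound D_bound]) auto
  have l: "lip (H N R T \<tau>) (1 * (1/2 * KD R T + CD N R * 1) + 1/2 * CD N R * \<bar>T - \<tau>\<bar>)"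
    unfolding H_def[abs_def] using t
    by (intro lip_mult[OF lip_cis_disp lip_phiD c1 b2]) auto
  have yy: "1/2 * CD N R * \<bar>T - \<tau>\<bar> \<le> 1/2 * CD N R * T"
    using t by (intro mult_left_mono) (auto simp: CD_def)
  show ?thesis unfolding KH_def by (rule lip_mono[OF l]) (use yy in linarith)
qed

lemma lip_G: "0 \<le> T \<Longrightarrow> lip (G N R T) (1/2 * (KH N R T * T))"
  unfolding lip_def
proof (intro allI)
  fix \<zeta> \<zeta>' assume T: "0 \<le> T"
  have i1: "integrable lborel (\<lambda>\<tau>. indicator {0..T} \<tau> *\<^sub>R H N R T \<tau> \<zeta>)"
    by (rule cbcs_integrable[where C="1/2 * CD N R" and M="\<bar>T\<bar>"])
       (auto simp: indicator_def intro: H_bound order_trans[OF H_bound] simp: CD_def)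
  have i2: "integrable lborel (\<lambda>\<tau>. indicator {0..T} \<tau> *\<^sub>R H N R T \<tau> \<zeta>')"
    by (rule cbcs_integrable[where C="1/2 * CD N R" and M="\<bar>T\<bar>"])
       (auto simp: indicator_def intro: H_bound order_trans[OF H_bound] simp: CD_def)
  have eq: "G N R T \<zeta> - G N R T \<zeta>' = - (\<i> / 2) * (LINT \<tau>:{0..T}|lborel. H N R T \<tau> \<zeta> - H N R T \<tau> \<zeta>')"
    unfolding G_def set_lebesgue_integral_def using i1 i2 by (simp add: scaleR_diff_right algebra_simps)
  have J: "cmod (LINT \<tau>:{0..T}|lborel. H N R T \<tau> \<zeta> - H N R T \<tau> \<zeta>') \<le> (KH N R T * \<bar>\<zeta> - \<zeta>'\<bar>) * (T - 0)"
    by (rule set_int_bound) (use T lip_H in \<open>auto simp: lip_def\<close>)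
  have "cmod (G N R T \<zeta> - G N R T \<zeta>') = cmod (LINT \<tau>:{0..T}|lborel. H N R T \<tau> \<zeta> - H N R T \<tau> \<zeta>') / 2"
    unfolding eq by (simp add: norm_mult norm_divide)
  also have "\<dots> \<le> ((KH N R T * \<bar>\<zeta> - \<zeta>'\<bar>) * (T - 0)) / 2" by (rule divide_right_mono[OF J]) simp
  finally show "cmod (G N R T \<zeta> - G N R T \<zeta>') \<le> 1/2 * (KH N R T * T) * \<bar>\<zeta> - \<zeta>'\<bar>"
    by (simp add: algebra_simps)
qed

lemma box_eq:
  assumes "(\<lambda>\<xi>. sigma \<rho> 1 \<xi>) \<in> borel_measurable borel" "\<And>\<xi>. \<bar>sigma \<rho> 1 \<xi>\<bar> \<le> 1" "0 \<le> T"
  shows "box \<rho> 1 (U2 (phi0 N R) T) = IF (\<lambda>\<zeta>. complex_of_real (sigma \<rho> 1 \<zeta>) * G N R T \<zeta>)"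
  unfolding box_def U2_eq
proof (rule fmult_IF[where E="{}" and D=1, OF nice_G[OF assms(3)]])
  show "\<And>\<xi>. \<xi> \<notin> {} \<Longrightarrow> fourier (IF (G N R T)) \<xi> = G N R T \<xi>"
    by (rule fourier_IF_lip[OF nice_G[OF assms(3)] lip_G[OF assms(3)]])
qed (use assms(1,2) in auto)

context
  fixes \<rho> :: "real \<Rightarrow> real"
  assumes adm: "admissible_rho \<rho>"
begin

lemma rho_cont: "continuous_on UNIV \<rho>"
proof -
  have "\<rho> differentiable (at x)" for x using adm unfolding admissible_rho_def schwartz_def
    by (metis funpow_0)
  then show ?thesis by (simp add: continuous_at_imp_continuous_on differentiable_imp_continuous_within)
qed

lemma rho_meas[measurable]: "\<rho> \<in> borel_measurable borel"
  using rho_cont by (simp add: borel_measurable_continuous_onI)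

lemma rho_01: "0 \<le> \<rho> x" "\<rho> x \<le> 1" using adm by (auto simp: admissible_rho_def)
lemma rho_one: "\<bar>x\<bar> \<le> 1/2 \<Longrightarrow> \<rho> x = 1" using adm by (auto simp: admissible_rho_def)
lemma rho_zero: "\<bar>x\<bar> \<ge> 1 \<Longrightarrow> \<rho> x = 0" using adm by (auto simp: admissible_rho_def)

lemma rho_sum: "(\<Sum>\<^sub>\<infinity>l::int. \<rho> (\<xi> - of_int l)) = \<rho> (\<xi> - of_int \<lfloor>\<xi>\<rfloor>) + \<rho> (\<xi> - of_int \<lfloor>\<xi>\<rfloor> - 1)"
proof -
  let ?F = "{\<lfloor>\<xi>\<rfloor>, \<lfloor>\<xi>\<rfloor> + 1}"
  have "(\<Sum>\<^sub>\<infinity>l::int. \<rho> (\<xi> - of_int l)) = (\<Sum>\<^sub>\<infinity>l\<in>?F. \<rho> (\<xi> - of_int l))"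
  proof (rule infsum_cong_neutral)
    fix l assume "l \<in> UNIV - ?F"
    then have "l \<le> \<lfloor>\<xi>\<rfloor> - 1 \<or> l \<ge> \<lfloor>\<xi>\<rfloor> + 2" by auto
    then have "\<bar>\<xi> - of_int l\<bar> \<ge> 1"
    proof
      assume "l \<le> \<lfloor>\<xi>\<rfloor> - 1"
      then have "of_int l \<le> of_int \<lfloor>\<xi>\<rfloor> - (1::real)" by linarith
      then show ?thesis using of_int_floor_le[of \<xi>] by linarith
    next
      assume "l \<ge> \<lfloor>\<xi>\<rfloor> + 2"
      then have "of_int l \<ge> of_int \<lfloor>\<xi>\<rfloor> + (2::real)" by linarith
      then show ?thesis using real_of_int_floor_add_one_gt[of \<xi>] by linarith
    qed
    then show "\<rho> (\<xi> - of_int l) = 0" by (rule rho_zero)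
  qed auto
  also have "\<dots> = \<rho> (\<xi> - of_int \<lfloor>\<xi>\<rfloor>) + \<rho> (\<xi> - of_int \<lfloor>\<xi>\<rfloor> - 1)"
    by (simp add: algebra_simps)
  finally show ?thesis .
qed

lemma S_ge1: "\<rho> (\<xi> - of_int \<lfloor>\<xi>\<rfloor>) + \<rho> (\<xi> - of_int \<lfloor>\<xi>\<rfloor> - 1) \<ge> 1"
proof (cases "\<xi> - of_int \<lfloor>\<xi>\<rfloor> \<le> 1/2")
  case True
  then have "\<rho> (\<xi> - of_int \<lfloor>\<xi>\<rfloor>) = 1" using of_int_floor_le[of \<xi>] by (intro rho_one) auto
  then show ?thesis using rho_01 by (simp add: add_increasing2)
next
  case False
  have "\<bar>\<xi> - of_int \<lfloor>\<xi>\<rfloor> - 1\<bar> \<le> 1/2" unfolding abs_le_iff using False real_of_int_floor_add_one_gt[of \<xi>] by linarith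
  then have "\<rho> (\<xi> - of_int \<lfloor>\<xi>\<rfloor> - 1) = 1" by (rule rho_one)
  then show ?thesis using rho_01 by (simp add: add_increasing)
qed

lemma sigma1_eq: "sigma \<rho> 1 \<xi> = \<rho> (\<xi> - 1) / (\<rho> (\<xi> - of_int \<lfloor>\<xi>\<rfloor>) + \<rho> (\<xi> - of_int \<lfloor>\<xi>\<rfloor> - 1))"
  unfolding sigma_def rho_sum by simp

lemma sigma1_meas: "(\<lambda>\<xi>. sigma \<rho> 1 \<xi>) \<in> borel_measurable borel"
  unfolding sigma1_eq by measurable

lemma sigma1_01: "0 \<le> sigma \<rho> 1 \<xi>" "sigma \<rho> 1 \<xi> \<le> 1"
  unfolding sigma1_eq using S_ge1[of \<xi>] rho_01[of "\<xi> - 1"]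
  by (auto simp: divide_le_eq)

lemma sigma1_abs: "\<bar>sigma \<rho> 1 \<xi>\<bar> \<le> 1" using sigma1_01[of \<xi>] by simp

lemma sigma1_zero: "\<xi> \<le> 0 \<or> \<xi> \<ge> 2 \<Longrightarrow> sigma \<rho> 1 \<xi> = 0"
  unfolding sigma1_eq by (subst rho_zero) auto

lemma sigma1_half: "1/2 \<le> \<xi> \<Longrightarrow> \<xi> \<le> 1 \<Longrightarrow> sigma \<rho> 1 \<xi> \<ge> 1/2"
proof -
  assume "1/2 \<le> \<xi>" "\<xi> \<le> 1"
  then have "\<rho> (\<xi> - 1) = 1" by (intro rho_one) auto
  moreover have "\<rho> (\<xi> - of_int \<lfloor>\<xi>\<rfloor>) + \<rho> (\<xi> - of_int \<lfloor>\<xi>\<rfloor> - 1) \<le> 2"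
    using rho_01[of "\<xi> - of_int \<lfloor>\<xi>\<rfloor>"] rho_01[of "\<xi> - of_int \<lfloor>\<xi>\<rfloor> - 1"] by linarith
  moreover have "\<rho> (\<xi> - of_int \<lfloor>\<xi>\<rfloor>) + \<rho> (\<xi> - of_int \<lfloor>\<xi>\<rfloor> - 1) > 0" using S_ge1[of \<xi>] by linarith
  ultimately show ?thesis unfolding sigma1_eq by (simp add: le_divide_eq)
qed

end

lemma cos_half: fixes \<theta> :: real shows "\<bar>\<theta>\<bar> \<le> 1 \<Longrightarrow> cos \<theta> \<ge> 1/2"
proof -
  assume t: "\<bar>\<theta>\<bar> \<le> 1"
  have c: "cos \<theta> = 1 - 2 * sin (\<theta>/2) ^ 2" using cos_double_sin[of "\<theta>/2"] by simp
  have "\<bar>sin (\<theta>/2)\<bar> \<le> 1/2" using abs_sin_x_le_abs_x[of "\<theta>/2"] t by simp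
  then have "sin (\<theta>/2) ^ 2 \<le> (1/2)^2" by (metis abs_ge_zero power2_abs power_mono)
  then have "sin (\<theta>/2) ^ 2 \<le> 1/4" by (simp add: power_divide)
  then show ?thesis unfolding c by linarith
qed

definition Mf :: "real \<Rightarrow> real \<Rightarrow> real" where
  "Mf N \<zeta> = (LBINT a. indicator (I_N N) a * indicator (I_N N) (\<zeta> - a))"

lemma ind_IN_integrable: "integrable lborel (\<lambda>a. indicator (I_N N) a * indicator (I_N N) (\<zeta> - a) :: real)"
  by (rule bcs_integrable[where C=1 and M="\<bar>N\<bar>+1"]) (auto simp: indicator_def I_N_def)

lemma Mf_nonneg: "0 \<le> Mf N \<zeta>"
  unfolding Mf_def by (rule integral_nonneg_AE) auto

lemma Mf_ge1: assumes "0 \<le> \<zeta>" "\<zeta> \<le> 1" shows "Mf N \<zeta> \<ge> 1"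
proof -
  have "(LBINT a. 1 * indicator {\<zeta>+N-1..N+1} a) \<le> Mf N \<zeta>"
    unfolding Mf_def
  proof (rule integral_mono[OF integrable_Icc_ind ind_IN_integrable])
    fix a show "1 * indicator {\<zeta>+N-1..N+1} a \<le> (indicator (I_N N) a * indicator (I_N N) (\<zeta> - a) :: real)"
      using assms by (auto simp: indicator_def I_N_def)
  qed
  moreover have "(LBINT a. 1 * indicator {\<zeta>+N-1..N+1} a) = 2 - \<zeta>" using assms by simp
  ultimately show ?thesis using assms by linarith
qed

lemma claim1:
  assumes \<zeta>: "0 \<le> \<zeta>" "\<zeta> \<le> 2" and \<tau>: "0 \<le> \<tau>" "\<tau> \<le> T" and T: "T \<le> 1/4" and x: "\<bar>x\<bar> \<le> 1/8"
  shows "Re (H N R T \<tau> \<zeta> * cis (x * \<zeta>)) \<ge> dispersion \<zeta> * R\<^sup>2 / (4*pi) * Mf N \<zeta>"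
proof -
  define \<alpha> where "\<alpha> = (T - \<tau>) * dispersion \<zeta> + x * \<zeta>"
  define \<theta> where "\<theta> a = \<alpha> + \<tau> * (dispersion a + dispersion (\<zeta> - a))" for a
  define g where "g a = R\<^sup>2 * (indicator (I_N N) a * indicator (I_N N) (\<zeta> - a))" for a
  have pw: "cis \<alpha> * (A N R \<tau> a * A N R \<tau> (\<zeta> - a)) = complex_of_real (g a) * cis (\<theta> a)" for a
  proof -
    have "cis \<alpha> * (A N R \<tau> a * A N R \<tau> (\<zeta> - a)) =
      (cis \<alpha> * cis (\<tau> * dispersion a) * cis (\<tau> * dispersion (\<zeta> - a))) * complex_of_real (g a)"
      by (simp add: A_def B0_def g_def power2_eq_square)
    also have "cis \<alpha> * cis (\<tau> * dispersion a) * cis (\<tau> * dispersion (\<zeta> - a)) = cis (\<theta> a)"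
      by (simp add: cis_mult \<theta>_def algebra_simps)
    finally show ?thesis by simp
  qed
  have gm[measurable]: "g \<in> borel_measurable borel" unfolding g_def by measurable
  have \<theta>m[measurable]: "\<theta> \<in> borel_measurable borel" unfolding \<theta>_def by measurable
  have gb: "\<bar>g a\<bar> \<le> R\<^sup>2" for a by (simp add: g_def indicator_def)
  have gs: "\<bar>a\<bar> > \<bar>N\<bar> + 1 \<Longrightarrow> g a = 0" for a by (auto simp: g_def indicator_def I_N_def)
  have g0: "0 \<le> g a" for a by (simp add: g_def)
  have int1: "integrable lborel (\<lambda>a. complex_of_real (g a) * cis (\<theta> a))"
    by (rule cbcs_integrable[where C="R\<^sup>2" and M="\<bar>N\<bar>+1"]) (use gb gs in \<open>auto simp: norm_mult\<close>)
  have eq: "H N R T \<tau> \<zeta> * cis (x * \<zeta>) = complex_of_real (dispersion \<zeta> / (2*pi)) * (LINT a|lborel. complex_of_real (g a) * cis (\<theta> a))"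
  proof -
    have c: "cis ((T - \<tau>) * dispersion \<zeta>) * cis (x * \<zeta>) = cis \<alpha>" by (simp add: \<alpha>_def cis_mult)
    have "H N R T \<tau> \<zeta> * cis (x * \<zeta>) = (cis ((T - \<tau>) * dispersion \<zeta>) * cis (x * \<zeta>)) *
       (complex_of_real (dispersion \<zeta>) * (LINT a|lborel. A N R \<tau> a * A N R \<tau> (\<zeta> - a)) / (2*pi))"
      by (simp add: H_def D_def conv_def algebra_simps)
    also have "\<dots> = cis \<alpha> * (complex_of_real (dispersion \<zeta>) * (LINT a|lborel. A N R \<tau> a * A N R \<tau> (\<zeta> - a)) / (2*pi))"
      unfolding c ..
    also have "\<dots> = complex_of_real (dispersion \<zeta> / (2*pi)) * (cis \<alpha> * (LINT a|lborel. A N R \<tau> a * A N R \<tau> (\<zeta> - a)))"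
      by (simp add: field_simps)
    finally have "H N R T \<tau> \<zeta> * cis (x * \<zeta>) = complex_of_real (dispersion \<zeta> / (2*pi)) * (cis \<alpha> * (LINT a|lborel. A N R \<tau> a * A N R \<tau> (\<zeta> - a)))" .
    also have "cis \<alpha> * (LINT a|lborel. A N R \<tau> a * A N R \<tau> (\<zeta> - a)) = (LINT a|lborel. cis \<alpha> * (A N R \<tau> a * A N R \<tau> (\<zeta> - a)))"
      by simp
    also have "\<dots> = (LINT a|lborel. complex_of_real (g a) * cis (\<theta> a))" unfolding pw ..
    finally show ?thesis .
  qed
  have "Re (LINT a|lborel. complex_of_real (g a) * cis (\<theta> a)) = (LBINT a. g a * cos (\<theta> a))"
    using integral_Re[OF int1] by (simp add: Re_complex_of_real)
  also have "\<dots> \<ge> (LBINT a. g a * (1/2))"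
  proof (rule integral_mono)
    show "integrable lborel (\<lambda>a. g a * (1/2))"
    proof (rule bcs_integrable[where C="R\<^sup>2" and M="\<bar>N\<bar>+1"])
      show "\<bar>g a * (1/2)\<bar> \<le> R\<^sup>2" for a using gb[of a] g0[of a] by simp
    qed (use gs in auto)
    show "integrable lborel (\<lambda>a. g a * cos (\<theta> a))"
    proof (rule bcs_integrable[where C="R\<^sup>2" and M="\<bar>N\<bar>+1"])
      show "\<bar>g a * cos (\<theta> a)\<bar> \<le> R\<^sup>2" for a by (rule abs_mult_le1[OF gb abs_cos_le_one])
    qed (use gs in auto)
    fix a
    have "\<bar>\<theta> a\<bar> \<le> 1"
    proof -
      have d1: "\<bar>dispersion \<zeta>\<bar> \<le> 1/2" "\<bar>dispersion a\<bar> \<le> 1/2" "\<bar>dispersion (\<zeta> - a)\<bar> \<le> 1/2"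
        by (rule dispersion_bound)+
      have "\<bar>(T - \<tau>) * dispersion \<zeta>\<bar> \<le> 1/4 * (1/2)"
        unfolding abs_mult by (rule mult_mono) (use \<tau> T d1 in auto)
      moreover have "\<bar>x * \<zeta>\<bar> \<le> 1/8 * 2" unfolding abs_mult by (rule mult_mono) (use x \<zeta> in auto)
      moreover have "\<bar>\<tau> * (dispersion a + dispersion (\<zeta> - a))\<bar> \<le> 1/4 * 1"
        unfolding abs_mult by (rule mult_mono) (use \<tau> T d1 in auto)
      ultimately show ?thesis unfolding \<theta>_def \<alpha>_def by linarith
    qed
    then have "cos (\<theta> a) \<ge> 1/2" by (rule cos_half)
    then show "g a * (1/2) \<le> g a * cos (\<theta> a)" by (rule mult_left_mono) (rule g0)
  qed
  finally have r: "Re (LINT a|lborel. complex_of_real (g a) * cis (\<theta> a)) \<ge> R\<^sup>2 / 2 * Mf N \<zeta>"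
    by (simp add: g_def Mf_def)
  have dz: "0 \<le> dispersion \<zeta> / (2*pi)" using \<zeta> by (simp add: dispersion_def)
  have "Re (H N R T \<tau> \<zeta> * cis (x * \<zeta>)) = dispersion \<zeta> / (2*pi) * Re (LINT a|lborel. complex_of_real (g a) * cis (\<theta> a))"
    unfolding eq by simp
  also have "\<dots> \<ge> dispersion \<zeta> / (2*pi) * (R\<^sup>2 / 2 * Mf N \<zeta>)" by (rule mult_left_mono[OF r dz])
  finally show ?thesis by (simp add: field_simps)
qed

definition J :: "real \<Rightarrow> real \<Rightarrow> real \<Rightarrow> real \<Rightarrow> complex" where
  "J N R T \<zeta> = (LINT \<tau>:{0..T}|lborel. H N R T \<tau> \<zeta>)"

lemma J_measurable[measurable]: "J N R T \<in> borel_measurable borel"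
  unfolding J_def[abs_def] H_def D_def conv_def set_lebesgue_integral_def by measurable

lemma J_bound: "0 \<le> T \<Longrightarrow> cmod (J N R T \<zeta>) \<le> 1/2 * CD N R * T"
  unfolding J_def using set_int_bound[OF H_measurable2 H_bound, of 0 T] by simp

lemma J_support: "\<bar>\<zeta>\<bar> > 2 * (\<bar>N\<bar> + 1) \<Longrightarrow> J N R T \<zeta> = 0"
  by (simp add: J_def H_support)

lemma disp_nonneg: "0 \<le> \<zeta> \<Longrightarrow> 0 \<le> dispersion \<zeta>"
  by (simp add: dispersion_def)

lemma disp_ge: "1/2 \<le> \<zeta> \<Longrightarrow> \<zeta> \<le> 1 \<Longrightarrow> dispersion \<zeta> \<ge> 2/5"
proof -
  assume z: "1/2 \<le> \<zeta>" "\<zeta> \<le> 1"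
  have "(2*\<zeta> - 1) * (\<zeta> - 2) \<le> 0" using z by (intro mult_nonneg_nonpos) auto
  then have "2 * (1 + \<zeta>\<^sup>2) \<le> 5 * \<zeta>" by (simp add: algebra_simps power2_eq_square)
  then show ?thesis by (simp add: dispersion_def le_divide_eq add_pos_nonneg)
qed

lemma claim2:
  assumes \<zeta>: "0 \<le> \<zeta>" "\<zeta> \<le> 2" and T: "0 \<le> T" "T \<le> 1/4" and x: "\<bar>x\<bar> \<le> 1/8"
  shows "Re (J N R T \<zeta> * cis (x * \<zeta>)) \<ge> T * (dispersion \<zeta> * R\<^sup>2 / (4*pi) * Mf N \<zeta>)"
proof -
  define c where "c = dispersion \<zeta> * R\<^sup>2 / (4*pi) * Mf N \<zeta>"
  have c0: "0 \<le> c" unfolding c_def using disp_nonneg[OF \<zeta>(1)] Mf_nonneg by simp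
  define f where "f \<tau> = indicator {0..T} \<tau> *\<^sub>R (H N R T \<tau> \<zeta> * cis (x * \<zeta>))" for \<tau>
  have fi: "integrable lborel f"
  proof (rule cbcs_integrable[where C="1/2 * CD N R" and M="\<bar>T\<bar>"])
    show "f \<in> borel_measurable borel" unfolding f_def by measurable
    show "cmod (f \<tau>) \<le> 1/2 * CD N R" for \<tau>
      using H_bound[of N R T \<tau> \<zeta>] by (auto simp: f_def indicator_def norm_mult CD_def)
  qed (auto simp: f_def indicator_def)
  have "J N R T \<zeta> * cis (x * \<zeta>) = (LINT \<tau>|lborel. (indicator {0..T} \<tau> *\<^sub>R H N R T \<tau> \<zeta>) * cis (x * \<zeta>))"
    unfolding J_def set_lebesgue_integral_def by (rule integral_mult_left_zero[symmetric])
  also have "\<dots> = (LINT \<tau>|lborel. f \<tau>)" unfolding f_def by (simp add: scaleR_conv_of_real mult.assoc)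
  finally have "J N R T \<zeta> * cis (x * \<zeta>) = (LINT \<tau>|lborel. f \<tau>)" .
  then have "Re (J N R T \<zeta> * cis (x * \<zeta>)) = (LBINT \<tau>. Re (f \<tau>))" using integral_Re[OF fi] by simp
  also have "\<dots> \<ge> (LBINT \<tau>. c * indicator {0..T} \<tau>)"
  proof (rule integral_mono[OF integrable_Icc_ind])
    show "integrable lborel (\<lambda>\<tau>. Re (f \<tau>))" using fi by simp
    fix \<tau> show "c * indicator {0..T} \<tau> \<le> Re (f \<tau>)"
    proof (cases "\<tau> \<in> {0..T}")
      case True
      then show ?thesis using claim1[OF \<zeta>, of \<tau> T x R N] T x by (auto simp: f_def c_def)
    qed (simp add: f_def)
  qed
  also have "(LBINT \<tau>. c * indicator {0..T} \<tau>) = T * c" using T by simp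
  finally show ?thesis unfolding c_def .
qed

lemma claim3:
  assumes adm: "admissible_rho \<rho>" and T: "0 \<le> T" "T \<le> 1/4" and x: "\<bar>x\<bar> \<le> 1/8"
  shows "sigma \<rho> 1 \<zeta> * Re (J N R T \<zeta> * cis (x * \<zeta>)) \<ge> T * R\<^sup>2 / (20*pi) * indicator {1/2..1} \<zeta>"
proof (cases "\<zeta> \<le> 0 \<or> \<zeta> \<ge> 2")
  case True
  then have "sigma \<rho> 1 \<zeta> = 0" by (rule sigma1_zero[OF adm])
  moreover have "\<zeta> \<notin> {1/2..1}" using True by auto
  ultimately show ?thesis by simp
next
  case False
  then have z: "0 \<le> \<zeta>" "\<zeta> \<le> 2" by auto
  have c2: "Re (J N R T \<zeta> * cis (x * \<zeta>)) \<ge> T * (dispersion \<zeta> * R\<^sup>2 / (4*pi) * Mf N \<zeta>)"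
    by (rule claim2[OF z T x])
  have nn: "0 \<le> T * (dispersion \<zeta> * R\<^sup>2 / (4*pi) * Mf N \<zeta>)"
    using T disp_nonneg[OF z(1)] Mf_nonneg[of N \<zeta>] by simp
  have s0: "0 \<le> sigma \<rho> 1 \<zeta>" by (rule sigma1_01[OF adm])
  show ?thesis
  proof (cases "\<zeta> \<in> {1/2..1}")
    case True
    then have zz: "1/2 \<le> \<zeta>" "\<zeta> \<le> 1" by auto
    have sh: "sigma \<rho> 1 \<zeta> \<ge> 1/2" by (rule sigma1_half[OF adm zz])
    have "T * (2/5 * R\<^sup>2 / (4*pi) * 1) \<le> T * (dispersion \<zeta> * R\<^sup>2 / (4*pi) * Mf N \<zeta>)"
      using T disp_ge[OF zz] Mf_ge1[of \<zeta> N] zz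
      by (intro mult_left_mono mult_mono divide_right_mono) auto
    then have r: "Re (J N R T \<zeta> * cis (x * \<zeta>)) \<ge> T * (2/5 * R\<^sup>2 / (4*pi) * 1)" using c2 by linarith
    have "1/2 * (T * (2/5 * R\<^sup>2 / (4*pi) * 1)) \<le> sigma \<rho> 1 \<zeta> * Re (J N R T \<zeta> * cis (x * \<zeta>))"
      by (rule mult_mono[OF sh r]) (use s0 T in auto)
    then show ?thesis using True by (simp add: field_simps)
  next
    case False
    have "0 \<le> sigma \<rho> 1 \<zeta> * Re (J N R T \<zeta> * cis (x * \<zeta>))" using s0 c2 nn by simp
    then show ?thesis using False by simp
  qed
qed

lemma box_lower:
  assumes adm: "admissible_rho \<rho>" and T: "0 \<le> T" "T \<le> 1/4" and x: "\<bar>x\<bar> \<le> 1/8"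
  shows "cmod (box \<rho> 1 (U2 (phi0 N R) T) x) \<ge> T * R\<^sup>2 / (160 * pi\<^sup>2)"
proof -
  define Q where "Q \<zeta> = complex_of_real (sigma \<rho> 1 \<zeta>) * (J N R T \<zeta> * cis (x * \<zeta>))" for \<zeta>
  have sm[measurable]: "(\<lambda>\<xi>. sigma \<rho> 1 \<xi>) \<in> borel_measurable borel" by (rule sigma1_meas[OF adm])
  have Qi: "integrable lborel Q"
  proof (rule cbcs_integrable[where C="1/2 * CD N R * T" and M="2 * (\<bar>N\<bar> + 1)"])
    show "Q \<in> borel_measurable borel" unfolding Q_def by measurable
    show "cmod (Q \<zeta>) \<le> 1/2 * CD N R * T" for \<zeta>
    proof -
      have "cmod (Q \<zeta>) = \<bar>sigma \<rho> 1 \<zeta>\<bar> * cmod (J N R T \<zeta>)" by (simp add: Q_def norm_mult)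
      also have "\<dots> \<le> 1 * (1/2 * CD N R * T)"
        by (rule mult_mono[OF sigma1_abs[OF adm] J_bound[OF T(1)]]) auto
      finally show ?thesis by simp
    qed
    show "Q \<zeta> = 0" if "\<bar>\<zeta>\<bar> > 2 * (\<bar>N\<bar> + 1)" for \<zeta> using J_support[OF that] by (simp add: Q_def)
  qed
  have "box \<rho> 1 (U2 (phi0 N R) T) x = IF (\<lambda>\<zeta>. complex_of_real (sigma \<rho> 1 \<zeta>) * G N R T \<zeta>) x"
    by (simp add: box_eq[OF sm sigma1_abs[OF adm] T(1)])
  also have "\<dots> = - (\<i> / 2) * (LINT \<zeta>|lborel. Q \<zeta>) / (2 * pi)"
    unfolding IF_def G_def[abs_def] Q_def J_def[symmetric]
    by (simp add: algebra_simps)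
  finally have eq: "cmod (box \<rho> 1 (U2 (phi0 N R) T) x) = cmod (LINT \<zeta>|lborel. Q \<zeta>) / (4 * pi)"
    by (simp add: norm_mult norm_divide)
  have "Re (LINT \<zeta>|lborel. Q \<zeta>) = (LBINT \<zeta>. Re (Q \<zeta>))" using integral_Re[OF Qi] by simp
  also have "\<dots> \<ge> (LBINT \<zeta>. T * R\<^sup>2 / (20*pi) * indicator {1/2..1::real} \<zeta>)"
  proof (rule integral_mono[OF integrable_Icc_ind])
    show "integrable lborel (\<lambda>\<zeta>. Re (Q \<zeta>))" using Qi by simp
    show "T * R\<^sup>2 / (20*pi) * indicator {1/2..1::real} \<zeta> \<le> Re (Q \<zeta>)" for \<zeta>
      using claim3[OF adm T x, where \<zeta>=\<zeta> and N=N and R=R] by (simp add: Q_def)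
  qed
  also have "(LBINT \<zeta>. T * R\<^sup>2 / (20*pi) * indicator {1/2..1::real} \<zeta>) = T * R\<^sup>2 / (40*pi)" by simp
  finally have "T * R\<^sup>2 / (40*pi) \<le> cmod (LINT \<zeta>|lborel. Q \<zeta>)" using complex_Re_le_cmod order_trans by blast
  then have "T * R\<^sup>2 / (40*pi) / (4 * pi) \<le> cmod (box \<rho> 1 (U2 (phi0 N R) T) x)"
    unfolding eq by (rule divide_right_mono) simp
  then show ?thesis by (simp add: power2_eq_square field_simps)
qed

lemma epowr_mono: assumes "a \<le> b" "0 \<le> p" shows "epowr a p \<le> epowr b p"
proof (cases "b = \<infinity>")
  case True then show ?thesis by (simp add: epowr_def)
next
  case False
  then have "a \<noteq> \<infinity>" using assms(1) by (auto simp: top_unique)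
  moreover have "enn2real a \<le> enn2real b" using assms(1) False by (simp add: enn2real_mono top.not_eq_extremum)
  ultimately show ?thesis using False assms
    by (auto simp: epowr_def intro!: ennreal_leI powr_mono2)
qed

lemma epowr_ennreal: "0 \<le> x \<Longrightarrow> 0 < p \<Longrightarrow> epowr (ennreal x) p = ennreal (x powr p)"
  by (simp add: epowr_def)

lemma lq_norm_ge:
  assumes "1 \<le> q"
  shows "ennreal \<bar>a 1\<bar> \<le> lq_norm q a"
proof (cases "q = \<infinity>")
  case True then show ?thesis by (auto simp: lq_norm_def intro: SUP_upper)
next
  case False
  define p where "p = enn2real q"
  have p1: "1 \<le> p" using assms False unfolding p_def
    using enn2real_mono[of 1 q] by (simp add: top.not_eq_extremum)
  have "ennreal (\<bar>a 1\<bar> powr p) = (\<Sum>\<^sub>\<infinity>n\<in>{1::int}. ennreal (\<bar>a n\<bar> powr p))" by simp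
  also have "\<dots> \<le> (\<Sum>\<^sub>\<infinity>n. ennreal (\<bar>a n\<bar> powr p))"
    by (rule infsum_mono_neutral) (auto intro: nonneg_summable_on_complete)
  finally have "epowr (ennreal (\<bar>a 1\<bar> powr p)) (1/p) \<le> epowr (\<Sum>\<^sub>\<infinity>n. ennreal (\<bar>a n\<bar> powr p)) (1/p)"
    by (rule epowr_mono) (use p1 in simp)
  moreover have "epowr (ennreal (\<bar>a 1\<bar> powr p)) (1/p) = ennreal \<bar>a 1\<bar>"
    using p1 by (simp add: epowr_def powr_powr)
  ultimately show ?thesis using False by (simp add: lq_norm_def p_def)
qed

lemma part1:
  assumes "1 \<le> q"
  shows "Lp_norm 2 (\<lambda>x. ennreal (cmod (box \<rho> 1 f x) * japan 1 powr s)) \<le> W_norm \<rho> 2 q s f"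
  unfolding W_norm_def Lp_norm_def
proof (rule epowr_mono)
  show "(\<integral>\<^sup>+ x. epowr (ennreal (cmod (box \<rho> 1 f x) * japan 1 powr s)) 2 \<partial>lborel)
    \<le> (\<integral>\<^sup>+ x. epowr (lq_norm q (\<lambda>n. cmod (box \<rho> n f x) * japan n powr s)) 2 \<partial>lborel)"
    apply (rule nn_integral_mono)
    apply (rule epowr_mono)
    using lq_norm_ge[OF assms, of "\<lambda>n. cmod (box \<rho> n f _) * japan n powr s"]
    by (auto simp: abs_mult)
qed simp


lemma Lp_lower:
  assumes adm: "admissible_rho \<rho>" and T: "0 \<le> T" "T \<le> 1/4"
  shows "Lp_norm 2 (\<lambda>x. ennreal (cmod (box \<rho> 1 (U2 (phi0 N R) T) x) * japan 1 powr s))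
       \<ge> ennreal (japan 1 powr s / (320 * pi\<^sup>2) * R\<^sup>2 * T)"
proof -
  define j where "j = japan 1 powr s"
  have j0: "0 < j" unfolding j_def japan_def by simp
  define b where "b = T * R\<^sup>2 / (160 * pi\<^sup>2) * j"
  have b0: "0 \<le> b" unfolding b_def using T j0 by simp
  have pt: "ennreal (b\<^sup>2) * indicator {-1/8..1/8::real} x \<le> epowr (ennreal (cmod (box \<rho> 1 (U2 (phi0 N R) T) x) * j)) 2" for x
  proof (cases "x \<in> {-1/8..1/8}")
    case True
    then have "\<bar>x\<bar> \<le> 1/8" by auto
    from box_lower[OF adm T this, where N=N and R=R]
    have "T * R\<^sup>2 / (160 * pi\<^sup>2) * j \<le> cmod (box \<rho> 1 (U2 (phi0 N R) T) x) * j"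
      by (rule mult_right_mono) (use j0 in simp)
    then have "b \<le> cmod (box \<rho> 1 (U2 (phi0 N R) T) x) * j" unfolding b_def .
    then have "b powr 2 \<le> (cmod (box \<rho> 1 (U2 (phi0 N R) T) x) * j) powr 2"
      using b0 by (intro powr_mono2) auto
    then have "ennreal (b\<^sup>2) \<le> ennreal ((cmod (box \<rho> 1 (U2 (phi0 N R) T) x) * j) powr 2)"
      using b0 by (simp add: ennreal_leI powr_numeral)
    then show ?thesis using True j0 by (simp add: epowr_ennreal)
  qed simp
  have "ennreal (b\<^sup>2 / 4) = ennreal (b\<^sup>2) * ennreal (1/4)" by (simp add: ennreal_mult''[symmetric])
  also have "\<dots> = (\<integral>\<^sup>+ x. ennreal (b\<^sup>2) * indicator {-1/8..1/8::real} x \<partial>lborel)"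
    by (simp add: nn_integral_cmult_indicator emeasure_lborel_Icc)
  also have "\<dots> \<le> (\<integral>\<^sup>+ x. epowr (ennreal (cmod (box \<rho> 1 (U2 (phi0 N R) T) x) * j)) 2 \<partial>lborel)"
    by (rule nn_integral_mono) (rule pt)
  finally have "ennreal (b\<^sup>2 / 4) \<le> (\<integral>\<^sup>+ x. epowr (ennreal (cmod (box \<rho> 1 (U2 (phi0 N R) T) x) * j)) 2 \<partial>lborel)" .
  then have "epowr (ennreal (b\<^sup>2 / 4)) (1/2) \<le> Lp_norm 2 (\<lambda>x. ennreal (cmod (box \<rho> 1 (U2 (phi0 N R) T) x) * j))"
    unfolding Lp_norm_def by (rule epowr_mono) simp
  moreover have "epowr (ennreal (b\<^sup>2 / 4)) (1/2) = ennreal (b / 2)"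
    using b0 by (simp add: epowr_ennreal powr_half_sqrt real_sqrt_divide)
  moreover have "b / 2 = japan 1 powr s / (320 * pi\<^sup>2) * R\<^sup>2 * T" by (simp add: b_def j_def field_simps)
  ultimately show ?thesis unfolding j_def by simp
qed

theorem lemma4p6:
  fixes \<rho> :: "real \<Rightarrow> real" and q :: ennreal and s :: real
  assumes "admissible_rho \<rho>" and "1 \<le> q"
  shows "\<exists>T0 > 0. \<exists>N0 \<ge> 2. \<exists>c > 0. \<forall>N R T. N \<ge> N0 \<and> R > 0 \<and> 0 < T \<and> T \<le> T0 \<longrightarrow>
     W_norm \<rho> 2 q s (U2 (phi0 N R) T)
       \<ge> Lp_norm 2 (\<lambda>x. ennreal (cmod (box \<rho> 1 (U2 (phi0 N R) T) x) * japan 1 powr s))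
     \<and> Lp_norm 2 (\<lambda>x. ennreal (cmod (box \<rho> 1 (U2 (phi0 N R) T) x) * japan 1 powr s))
       \<ge> ennreal (c * R\<^sup>2 * T)"
proof -
  define c where "c = japan 1 powr s / (320 * pi\<^sup>2)"
  have c0: "0 < c" by (simp add: c_def japan_def)
  have main: "W_norm \<rho> 2 q s (U2 (phi0 N R) T) \<ge> Lp_norm 2 (\<lambda>x. ennreal (cmod (box \<rho> 1 (U2 (phi0 N R) T) x) * japan 1 powr s))
     \<and> Lp_norm 2 (\<lambda>x. ennreal (cmod (box \<rho> 1 (U2 (phi0 N R) T) x) * japan 1 powr s)) \<ge> ennreal (c * R\<^sup>2 * T)"
    if h: "2 \<le> N \<and> 0 < R \<and> 0 < T \<and> T \<le> 1/4" for N R T :: real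
  proof
    show "W_norm \<rho> 2 q s (U2 (phi0 N R) T) \<ge> Lp_norm 2 (\<lambda>x. ennreal (cmod (box \<rho> 1 (U2 (phi0 N R) T) x) * japan 1 powr s))"
      by (rule part1[OF assms(2)])
    show "Lp_norm 2 (\<lambda>x. ennreal (cmod (box \<rho> 1 (U2 (phi0 N R) T) x) * japan 1 powr s)) \<ge> ennreal (c * R\<^sup>2 * T)"
      unfolding c_def by (rule Lp_lower[OF assms(1)]) (use h in auto)
  qed
  show ?thesis
    apply (rule exI[where x="1/4"])
    apply (intro conjI)
     apply simp
    apply (rule exI[where x="2"])
    apply (intro conjI)
     apply simp
    apply (rule exI[where x=c])
    apply (intro conjI)
     apply (rule c0)
    by (intro allI impI main)
qed

end
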